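(* Let $\Gamma$ be a tetravalent graph whose full automorphism group $\mathrm{Aut}(\Gamma)$ acts regularly on the arcs of $\Gamma$. Then $\Gamma$ is the underlying graph of a map of class $2_{\{0,1\}}$ if and only if the vertex stabilizers in $\mathrm{Aut}(\Gamma)$ are isomorphic to the Klein $4$-group. Moreover, in this case there are exactly three pairwise nonisomorphic such maps.
   Context: A map is a $2$-cell embedding of a connected simple graph (its underlying graph) in a closed surface; the components of the complement are the faces. All maps considered are polytopal: flags correspond bijectively to incident triples (vertex, edge, face). For a flag $\Phi$ and $i\in\{0,1,2\}$, $\Phi^i$ is the unique flag differing from $\Phi$ exactly in its vertex ($i=0$), edge ($i=1$) or face ($i=2$). $\mathrm{Aut}(\mathcal M)$ is the group of automorphisms of the underlying graph preserving the set of faces, acting on flags. A map is in class $2_{\{0,1\}}$ if $\mathrm{Aut}(\mathcal M)$ has exactly two orbits on flags and for every flag $\Phi$, the flags $\Phi^0,\Phi^1$ lie in the orbit of $\Phi$ while $\Phi^2$ does not. *)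

theory Defs
  imports "HOL-Algebra.Algebra"
begin

definition simple_graph :: "'a set \<Rightarrow> 'a set set \<Rightarrow> bool" where
  "simple_graph V E \<longleftrightarrow> finite V \<and> (\<forall>e\<in>E. \<exists>u v. u \<in> V \<and> v \<in> V \<and> u \<noteq> v \<and> e = {u, v})"

definition connected_graph :: "'a set \<Rightarrow> 'a set set \<Rightarrow> bool" where
  "connected_graph V E \<longleftrightarrow> V \<noteq> {} \<and>
     (\<forall>u\<in>V. \<forall>v\<in>V. (u, v) \<in> {(x, y). {x, y} \<in> E}\<^sup>*)"

definition tetravalent :: "'a set \<Rightarrow> 'a set set \<Rightarrow> bool" where
  "tetravalent V E \<longleftrightarrow> simple_graph V E \<and> connected_graph V E \<and>
     (\<forall>v\<in>V. card {e\<in>E. v \<in> e} = 4)"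

definition arcs :: "'a set set \<Rightarrow> ('a \<times> 'a) set" where
  "arcs E = {(u, v). {u, v} \<in> E}"

definition graph_auts :: "'a set \<Rightarrow> 'a set set \<Rightarrow> ('a \<Rightarrow> 'a) set" where
  "graph_auts V E = {\<sigma> \<in> carrier (BijGroup V).
      \<forall>u\<in>V. \<forall>v\<in>V. ({u, v} \<in> E \<longleftrightarrow> {\<sigma> u, \<sigma> v} \<in> E)}"

definition aut_group :: "'a set \<Rightarrow> 'a set set \<Rightarrow> ('a \<Rightarrow> 'a) monoid" where
  "aut_group V E = (BijGroup V)\<lparr>carrier := graph_auts V E\<rparr>"

definition vertex_stabilizer :: "'a set \<Rightarrow> 'a set set \<Rightarrow> 'a \<Rightarrow> ('a \<Rightarrow> 'a) monoid" where
  "vertex_stabilizer V E v = (aut_group V E)\<lparr>carrier := {\<sigma> \<in> graph_auts V E. \<sigma> v = v}\<rparr>"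

definition arc_regular :: "'a set \<Rightarrow> 'a set set \<Rightarrow> bool" where
  "arc_regular V E \<longleftrightarrow> (\<forall>(u, v)\<in>arcs E. \<forall>(u', v')\<in>arcs E.
      \<exists>!\<sigma>. \<sigma> \<in> graph_auts V E \<and> \<sigma> u = u' \<and> \<sigma> v = v')"

definition klein_four_group :: "(int \<times> int) monoid" where
  "klein_four_group = integer_mod_group 2 \<times>\<times> integer_mod_group 2"

text \<open>A face is identified with its boundary, a set of edges forming a cycle of the graph.\<close>

definition is_cycle :: "'a set set \<Rightarrow> 'a set set \<Rightarrow> bool" where
  "is_cycle E C \<longleftrightarrow> C \<noteq> {} \<and> C \<subseteq> E \<and>
     (\<forall>v\<in>\<Union>C. card {e\<in>C. v \<in> e} = 2) \<and>
     (\<forall>u\<in>\<Union>C. \<forall>v\<in>\<Union>C. (u, v) \<in> {(x, y). {x, y} \<in> C}\<^sup>*)"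

text \<open>Link of a vertex: bipartite incidence graph between the edges and faces at v.\<close>
definition link_rel :: "'a set set \<Rightarrow> 'a set set set \<Rightarrow> 'a \<Rightarrow>
    ('a set + 'a set set) rel" where
  "link_rel E F v = {(Inl e, Inr f) | e f. e \<in> E \<and> f \<in> F \<and> v \<in> e \<and> e \<in> f}
                  \<union> {(Inr f, Inl e) | e f. e \<in> E \<and> f \<in> F \<and> v \<in> e \<and> e \<in> f}"

definition link_nodes :: "'a set set \<Rightarrow> 'a set set set \<Rightarrow> 'a \<Rightarrow> ('a set + 'a set set) set" where
  "link_nodes E F v = Inl ` {e\<in>E. v \<in> e} \<union> Inr ` {f\<in>F. v \<in> \<Union>f}"

text \<open>F is the face set of a polytopal map with underlying graph (V,E): faces are cycles,
  every edge lies in exactly two faces, and the faces around every vertex form a single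
  cycle (so the complex obtained by gluing discs is a closed surface).\<close>
definition polytopal_map :: "'a set \<Rightarrow> 'a set set \<Rightarrow> 'a set set set \<Rightarrow> bool" where
  "polytopal_map V E F \<longleftrightarrow> simple_graph V E \<and> connected_graph V E \<and>
     (\<forall>f\<in>F. is_cycle E f) \<and>
     (\<forall>e\<in>E. card {f\<in>F. e \<in> f} = 2) \<and>
     (\<forall>v\<in>V. \<forall>x\<in>link_nodes E F v. \<forall>y\<in>link_nodes E F v. (x, y) \<in> (link_rel E F v)\<^sup>*)"

definition flags :: "'a set \<Rightarrow> 'a set set \<Rightarrow> 'a set set set \<Rightarrow> ('a \<times> 'a set \<times> 'a set set) set" where
  "flags V E F = {(v, e, f). v \<in> V \<and> e \<in> E \<and> f \<in> F \<and> v \<in> e \<and> e \<in> f}"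

definition flag0 :: "'a \<times> 'a set \<times> 'a set set \<Rightarrow> 'a \<times> 'a set \<times> 'a set set" where
  "flag0 = (\<lambda>(v, e, f). (THE w. w \<in> e \<and> w \<noteq> v, e, f))"

definition flag1 :: "'a \<times> 'a set \<times> 'a set set \<Rightarrow> 'a \<times> 'a set \<times> 'a set set" where
  "flag1 = (\<lambda>(v, e, f). (v, THE e'. e' \<in> f \<and> v \<in> e' \<and> e' \<noteq> e, f))"

definition flag2 :: "'a set set set \<Rightarrow> 'a \<times> 'a set \<times> 'a set set \<Rightarrow> 'a \<times> 'a set \<times> 'a set set" where
  "flag2 F = (\<lambda>(v, e, f). (v, e, THE f'. f' \<in> F \<and> e \<in> f' \<and> f' \<noteq> f))"

definition face_image :: "('a \<Rightarrow> 'a) \<Rightarrow> 'a set set \<Rightarrow> 'a set set" where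
  "face_image \<sigma> f = (\<lambda>e. \<sigma> ` e) ` f"

definition map_auts :: "'a set \<Rightarrow> 'a set set \<Rightarrow> 'a set set set \<Rightarrow> ('a \<Rightarrow> 'a) set" where
  "map_auts V E F = {\<sigma> \<in> graph_auts V E. face_image \<sigma> ` F = F}"

definition flag_act :: "('a \<Rightarrow> 'a) \<Rightarrow> 'a \<times> 'a set \<times> 'a set set \<Rightarrow> 'a \<times> 'a set \<times> 'a set set" where
  "flag_act \<sigma> = (\<lambda>(v, e, f). (\<sigma> v, \<sigma> ` e, face_image \<sigma> f))"

definition flag_orbit :: "'a set \<Rightarrow> 'a set set \<Rightarrow> 'a set set set \<Rightarrow> 'a \<times> 'a set \<times> 'a set set
    \<Rightarrow> ('a \<times> 'a set \<times> 'a set set) set" where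
  "flag_orbit V E F \<Phi> = (\<lambda>\<sigma>. flag_act \<sigma> \<Phi>) ` map_auts V E F"

definition class_2_01 :: "'a set \<Rightarrow> 'a set set \<Rightarrow> 'a set set set \<Rightarrow> bool" where
  "class_2_01 V E F \<longleftrightarrow>
     card (flag_orbit V E F ` flags V E F) = 2 \<and>
     (\<forall>\<Phi>\<in>flags V E F. flag0 \<Phi> \<in> flag_orbit V E F \<Phi> \<and> flag1 \<Phi> \<in> flag_orbit V E F \<Phi> \<and>
                        flag2 F \<Phi> \<notin> flag_orbit V E F \<Phi>)"

definition map_isomorphic :: "'a set \<Rightarrow> 'a set set \<Rightarrow> 'a set set set \<Rightarrow> 'a set set set \<Rightarrow> bool" where
  "map_isomorphic V E F1 F2 \<longleftrightarrow> (\<exists>\<sigma>\<in>graph_auts V E. face_image \<sigma> ` F1 = F2)"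

definition class_2_01_map :: "'a set \<Rightarrow> 'a set set \<Rightarrow> 'a set set set \<Rightarrow> bool" where
  "class_2_01_map V E F \<longleftrightarrow> polytopal_map V E F \<and> class_2_01 V E F"

end

theory Submission
  imports Defs
begin

lemma face_image_comp: "face_image \<sigma> (face_image \<tau> f) = face_image (\<sigma> \<circ> \<tau>) f"
  by (auto simp: face_image_def image_comp)

lemma face_image_cong:
  assumes "\<forall>e\<in>f. e \<subseteq> V" "\<forall>x\<in>V. \<sigma> x = \<tau> x"
  shows "face_image \<sigma> f = face_image \<tau> f"
proof -
  have "\<sigma> ` e = \<tau> ` e" if "e \<in> f" for e using assms that by (force simp: image_def)
  then show ?thesis unfolding face_image_def by (rule image_cong[OF refl])
qed

lemma face_image_id:
  assumes "\<forall>e\<in>f. e \<subseteq> V" "\<forall>x\<in>V. \<sigma> x = x"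
  shows "face_image \<sigma> f = f"
proof -
  have "face_image \<sigma> f = face_image id f" by (rule face_image_cong[OF assms(1)]) (use assms in auto)
  then show ?thesis by (simp add: face_image_def)
qed

locale arg =
  fixes V :: "'a set" and E :: "'a set set"
  assumes tet: "tetravalent V E" and reg: "arc_regular V E"
begin

abbreviation "A \<equiv> graph_auts V E"

lemma finV: "finite V" using tet by (simp add: tetravalent_def simple_graph_def)

lemma E_edge: "e \<in> E \<Longrightarrow> \<exists>u w. u\<in>V \<and> w\<in>V \<and> u\<noteq>w \<and> e={u,w}"
  using tet by (simp add: tetravalent_def simple_graph_def)

lemma E_sub: "e \<in> E \<Longrightarrow> e \<subseteq> V" using E_edge by blast

lemma E_V: assumes "{u,w} \<in> E" shows "u\<in>V" "w\<in>V" "u\<noteq>w"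
  using E_edge[OF assms] by (auto simp: doubleton_eq_iff)

lemma E_sym: "{u,w} \<in> E \<Longrightarrow> {w,u} \<in> E" by (simp add: insert_commute)

lemma A_bij: "\<sigma>\<in>A \<Longrightarrow> bij_betw \<sigma> V V"
  by (simp add: graph_auts_def BijGroup_def Bij_def)

lemma A_ext: "\<sigma>\<in>A \<Longrightarrow> \<sigma> \<in> extensional V"
  by (simp add: graph_auts_def BijGroup_def Bij_def)

lemma A_V: "\<sigma>\<in>A \<Longrightarrow> x\<in>V \<Longrightarrow> \<sigma> x \<in> V"
  using A_bij bij_betwE by blast

lemma A_inj: "\<sigma>\<in>A \<Longrightarrow> x\<in>V \<Longrightarrow> y\<in>V \<Longrightarrow> \<sigma> x = \<sigma> y \<Longrightarrow> x = y"
  using A_bij by (metis bij_betw_iff_bijections)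

lemma A_edge_iff: "\<sigma>\<in>A \<Longrightarrow> u\<in>V \<Longrightarrow> w\<in>V \<Longrightarrow> {\<sigma> u, \<sigma> w}\<in>E \<longleftrightarrow> {u,w}\<in>E"
  by (simp add: graph_auts_def)

lemma A_edge: "\<sigma>\<in>A \<Longrightarrow> {u,w}\<in>E \<Longrightarrow> {\<sigma> u, \<sigma> w}\<in>E"
  using A_edge_iff E_V by blast

lemma A_edge_img: "\<sigma>\<in>A \<Longrightarrow> e\<in>E \<Longrightarrow> \<sigma> ` e \<in> E"
  using A_edge E_edge by force

lemma A_eq: "\<sigma>\<in>A \<Longrightarrow> \<tau>\<in>A \<Longrightarrow> (\<And>x. x\<in>V \<Longrightarrow> \<sigma> x = \<tau> x) \<Longrightarrow> \<sigma> = \<tau>"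
  using A_ext extensionalityI by blast

lemma A_uniq: assumes "\<sigma>\<in>A" "\<tau>\<in>A" "{u,w}\<in>E" "\<sigma> u = \<tau> u" "\<sigma> w = \<tau> w"
  shows "\<sigma> = \<tau>"
proof -
  have a: "(u,w) \<in> arcs E" using assms(3) by (simp add: arcs_def)
  have b: "(\<sigma> u, \<sigma> w) \<in> arcs E" using A_edge[OF assms(1,3)] by (simp add: arcs_def)
  from reg a b have "\<exists>!\<rho>. \<rho> \<in> A \<and> \<rho> u = \<sigma> u \<and> \<rho> w = \<sigma> w"
    unfolding arc_regular_def by fast
  then show ?thesis using assms by metis
qed

lemma A_ex: assumes "{u,w}\<in>E" "{u',w'}\<in>E" shows "\<exists>\<sigma>\<in>A. \<sigma> u = u' \<and> \<sigma> w = w'"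
proof -
  have a: "(u,w) \<in> arcs E" "(u',w') \<in> arcs E" using assms by (auto simp add: arcs_def)
  from reg a have "\<exists>!\<rho>. \<rho> \<in> A \<and> \<rho> u = u' \<and> \<rho> w = w'"
    unfolding arc_regular_def by fast
  then show ?thesis by metis
qed

lemma A_comp: assumes "\<sigma>\<in>A" "\<tau>\<in>A" shows "compose V \<sigma> \<tau> \<in> A"
proof -
  have "bij_betw (compose V \<sigma> \<tau>) V V"
    using assms A_bij bij_betw_compose by (metis bij_betw_cong bij_betw_trans compose_eq comp_apply)
  moreover have "compose V \<sigma> \<tau> \<in> extensional V" by (simp add: compose_def)
  moreover have "{compose V \<sigma> \<tau> u, compose V \<sigma> \<tau> v} \<in> E \<longleftrightarrow> {u,v}\<in>E" if "u\<in>V" "v\<in>V" for u v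
    using that assms A_edge_iff A_V by (simp add: compose_def)
  ultimately show ?thesis by (simp add: graph_auts_def BijGroup_def Bij_def)
qed

lemma A_id: "(\<lambda>x\<in>V. x) \<in> A"
  by (simp add: graph_auts_def BijGroup_def Bij_def bij_betw_def inj_on_def)

lemma A_inv: assumes "\<sigma>\<in>A" shows "\<exists>\<sigma>'\<in>A. \<forall>x\<in>V. \<sigma>' (\<sigma> x) = x \<and> \<sigma> (\<sigma>' x) = x"
proof -
  let ?s = "\<lambda>x\<in>V. inv_into V \<sigma> x"
  have bij: "bij_betw \<sigma> V V" using A_bij assms by blast
  have "?s \<in> Bij V" using restrict_inv_into_Bij[of \<sigma> V] assms
    by (simp add: Bij_def bij A_ext)
  hence b2: "bij_betw ?s V V" "?s \<in> extensional V" by (auto simp: Bij_def)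
  have l: "\<forall>x\<in>V. ?s (\<sigma> x) = x \<and> \<sigma> (?s x) = x"
    using bij A_V[OF assms] by (simp add: bij_betw_inv_into_left bij_betw_inv_into_right)
  have "{?s u, ?s v} \<in> E \<longleftrightarrow> {u,v}\<in>E" if "u\<in>V" "v\<in>V" for u v
  proof -
    have "?s u \<in> V" "?s v \<in> V" using b2 that bij_betwE by blast+
    then have "{\<sigma> (?s u), \<sigma> (?s v)} \<in> E \<longleftrightarrow> {?s u, ?s v} \<in> E" using A_edge_iff assms by blast
    then show ?thesis using l that by simp
  qed
  then have "?s \<in> A" using b2 by (simp add: graph_auts_def BijGroup_def Bij_def)
  then show ?thesis using l by blast
qed

end

definition cyc :: "(nat \<Rightarrow> 'a) \<Rightarrow> 'a set set" where
  "cyc x = {{x k, x (Suc k)} | k. True}"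

definition cwalk :: "'a set set \<Rightarrow> nat \<Rightarrow> (nat \<Rightarrow> 'a) \<Rightarrow> bool" where
  "cwalk E n x \<longleftrightarrow> 3 \<le> n \<and> (\<forall>k. x (k + n) = x k) \<and> inj_on x {..<n} \<and> (\<forall>k. {x k, x (Suc k)} \<in> E)"

lemma cwalk_mult: assumes "cwalk E n x" shows "x (k + m * n) = x k"
proof (induction m)
  case 0 then show ?case by simp
next
  case (Suc m)
  have "x (k + Suc m * n) = x ((k + m * n) + n)" by (simp add: algebra_simps)
  also have "\<dots> = x (k + m*n)" using assms by (simp add: cwalk_def)
  finally show ?case using Suc by simp
qed

lemma cwalk_mod: assumes "cwalk E n x" shows "x k = x (k mod n)"
  using cwalk_mult[OF assms, of "k mod n" "k div n"] by (simp add: mod_div_mult_eq)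

lemma cwalk_eq_iff: assumes "cwalk E n x" shows "x a = x b \<longleftrightarrow> a mod n = b mod n"
proof
  assume "x a = x b"
  hence "x (a mod n) = x (b mod n)" using cwalk_mod[OF assms] by metis
  moreover have "n > 0" using assms by (simp add: cwalk_def)
  ultimately show "a mod n = b mod n" using assms unfolding cwalk_def inj_on_def by auto
next
  assume "a mod n = b mod n" then show "x a = x b" using cwalk_mod[OF assms] by metis
qed

lemma Suc_mod_cancel: assumes "0 < (n::nat)" "Suc a mod n = Suc b mod n" shows "a mod n = b mod n"
proof -
  have "a mod n = (Suc a + (n-1)) mod n" using assms(1) by simp
  also have "\<dots> = (Suc a mod n + (n-1)) mod n" by (simp add: mod_add_left_eq)
  also have "\<dots> = (Suc b mod n + (n-1)) mod n" using assms(2) by simp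
  also have "\<dots> = (Suc b + (n-1)) mod n" by (simp add: mod_add_left_eq)
  also have "\<dots> = b mod n" using assms(1) by simp
  finally show ?thesis .
qed

lemma cwalk_at: assumes "cwalk E n x"
  shows "{e\<in>cyc x. x j \<in> e} = {{x j, x (Suc j)}, {x (j+n-1), x j}}"
    and "{x j, x (Suc j)} \<noteq> {x (j+n-1), x j}"
proof -
  have n3: "3 \<le> n" using assms by (simp add: cwalk_def)
  have per: "x (j+n) = x j" using assms by (simp add: cwalk_def)
  have s: "Suc (j+n-1) = j+n" using n3 by simp
  show "{e\<in>cyc x. x j \<in> e} = {{x j, x (Suc j)}, {x (j+n-1), x j}}"
  proof (rule equalityI; rule subsetI)
    fix e assume "e \<in> {e\<in>cyc x. x j \<in> e}"
    then obtain k where e: "e = {x k, x (Suc k)}" and j: "x j = x k \<or> x j = x (Suc k)"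
      by (auto simp: cyc_def)
    show "e \<in> {{x j, x (Suc j)}, {x (j+n-1), x j}}"
    proof (cases "x j = x k")
      case True
      hence "j mod n = k mod n" using cwalk_eq_iff[OF assms] by blast
      hence "Suc j mod n = Suc k mod n" by (metis mod_Suc_eq)
      hence "x (Suc j) = x (Suc k)" using cwalk_eq_iff[OF assms] by blast
      then show ?thesis using e True by simp
    next
      case False
      hence "x j = x (Suc k)" using j by simp
      hence "Suc k mod n = (j+n) mod n" using cwalk_eq_iff[OF assms] by simp
      hence "Suc k mod n = Suc (j+n-1) mod n" using s by simp
      moreover have "0 < n" using n3 by simp
      ultimately have "k mod n = (j+n-1) mod n" using Suc_mod_cancel by blast
      hence "x k = x (j+n-1)" using cwalk_eq_iff[OF assms] by blast
      then show ?thesis using e \<open>x j = x (Suc k)\<close> by auto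
    qed
  next
    fix e assume "e \<in> {{x j, x (Suc j)}, {x (j+n-1), x j}}"
    moreover have "{x (j+n-1), x j} = {x (j+n-1), x (Suc (j+n-1))}" using s per by simp
    hence "{x (j+n-1), x j} \<in> cyc x" unfolding cyc_def by blast
    moreover have "{x j, x (Suc j)} \<in> cyc x" unfolding cyc_def by blast
    ultimately show "e \<in> {e\<in>cyc x. x j \<in> e}" by auto
  qed
  show "{x j, x (Suc j)} \<noteq> {x (j+n-1), x j}"
  proof
    assume h: "{x j, x (Suc j)} = {x (j+n-1), x j}"
    have "x j \<noteq> x (Suc j)"
    proof
      assume "x j = x (Suc j)"
      hence "Suc j mod n = j mod n" using cwalk_eq_iff[OF assms] by metis
      hence "n dvd Suc j - j" using mod_eq_dvd_iff_nat[of j "Suc j" n] by simp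
      then show False using n3 by simp
    qed
    hence "x (Suc j) = x (j+n-1)" using h by (auto simp: doubleton_eq_iff)
    hence "(j+n-1) mod n = Suc j mod n" using cwalk_eq_iff[OF assms] by metis
    hence "n dvd (j+n-1) - Suc j" using mod_eq_dvd_iff_nat[of "Suc j" "j+n-1" n] n3 by simp
    moreover have "(j+n-1) - Suc j = n - 2" using n3 by simp
    moreover have "0 < n - 2" using n3 by simp
    ultimately have "n \<le> n - 2" using dvd_imp_le by metis
    then show False using n3 by simp
  qed
qed

lemma cwalk_vert: "v \<in> \<Union>(cyc x) \<Longrightarrow> \<exists>j. v = x j"
  by (auto simp: cyc_def)

lemma cwalk_cycle: assumes "cwalk E n x" shows "is_cycle E (cyc x)"
proof -
  have n3: "3 \<le> n" using assms by (simp add: cwalk_def)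
  have "cyc x \<noteq> {}" by (auto simp: cyc_def)
  moreover have "cyc x \<subseteq> E" using assms by (auto simp: cyc_def cwalk_def)
  moreover have "card {e\<in>cyc x. v \<in> e} = 2" if v: "v\<in>\<Union>(cyc x)" for v
  proof -
    obtain j where "v = x j" using cwalk_vert[OF v] by blast
    then show ?thesis using cwalk_at[OF assms, of j] by simp
  qed
  moreover have "(u, v) \<in> {(a, b). {a, b} \<in> cyc x}\<^sup>*" if uv: "u\<in>\<Union>(cyc x)" "v\<in>\<Union>(cyc x)" for u v
  proof -
    let ?R = "{(a, b). {a, b} \<in> cyc x}"
    obtain i where i: "u = x i" using cwalk_vert[OF uv(1)] by blast
    obtain j where j: "v = x j" using cwalk_vert[OF uv(2)] by blast
    note ij = i j
    have step: "(x i, x (i+m)) \<in> ?R\<^sup>*" for m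
    proof (induction m)
      case 0 then show ?case by simp
    next
      case (Suc m)
      have "(x (i+m), x (i + Suc m)) \<in> ?R" by (auto simp: cyc_def)
      then show ?case using Suc by (meson rtrancl.rtrancl_into_rtrancl)
    qed
    have "i * 1 \<le> i * n" by (rule mult_le_mono2) (use n3 in simp)
    hence "i \<le> j + i * n" by linarith
    hence "x (i + (j + i*n - i)) = x (j + i*n)" by simp
    also have "\<dots> = x j" using cwalk_mult[OF assms] by simp
    finally show ?thesis using step[of "j + i*n - i"] ij by simp
  qed
  ultimately show ?thesis by (simp add: is_cycle_def)
qed

lemma face_image_cyc: "face_image \<sigma> (cyc x) = cyc (\<sigma> \<circ> x)"
proof -
  have "face_image \<sigma> (cyc x) = {\<sigma> ` {x k, x (Suc k)} | k. True}" unfolding face_image_def cyc_def by blast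
  then show ?thesis by (simp add: cyc_def)
qed

lemma cyc_shift: assumes "cwalk E n x" shows "cyc (\<lambda>k. x (Suc k)) = cyc x"
proof -
  have n3: "3 \<le> n" using assms by (simp add: cwalk_def)
  have "{x k, x (Suc k)} \<in> cyc (\<lambda>k. x (Suc k))" for k
  proof -
    have 1: "x k = x (Suc (k+n-1))" using n3 assms by (simp add: cwalk_def)
    have 2: "Suc (Suc (k+n-1)) = Suc k + n" using n3 by simp
    have 3: "x (Suc k + n) = x (Suc k)" using assms unfolding cwalk_def by blast
    have "{x k, x (Suc k)} = {x (Suc (k+n-1)), x (Suc (Suc (k+n-1)))}" using 1 2 3 by simp
    then show ?thesis unfolding cyc_def by blast
  qed
  then show ?thesis unfolding cyc_def by blast
qed

lemma cycle_sub_eq: assumes "is_cycle E C" "is_cycle E D" "C \<subseteq> D" "\<forall>e\<in>D. e \<noteq> {}" shows "C = D"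
proof (rule ccontr)
  assume "C \<noteq> D"
  then obtain e where e: "e \<in> D" "e \<notin> C" using assms(3) by blast
  let ?S = "\<Union>C"
  have loc: "{e\<in>D. y \<in> e} = {e\<in>C. y \<in> e}" if "y \<in> ?S" for y
  proof -
    have "y \<in> \<Union>D" using that assms(3) by blast
    hence c: "card {e\<in>D. y \<in> e} = 2" "card {e\<in>C. y \<in> e} = 2"
      using assms(1,2) that by (auto simp: is_cycle_def)
    have "finite {e\<in>D. y \<in> e}" using c(1) card.infinite by force
    moreover have "{e\<in>C. y \<in> e} \<subseteq> {e\<in>D. y \<in> e}" using assms(3) by blast
    ultimately show ?thesis using card_subset_eq[of "{e\<in>D. y \<in> e}" "{e\<in>C. y \<in> e}"] c by simp
  qed
  obtain z where z: "z \<in> e" using e assms(4) by blast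
  have zS: "z \<notin> ?S"
  proof
    assume "z \<in> ?S" then have "e \<in> {e\<in>C. z \<in> e}" using loc[of z] e z by blast
    then show False using e by simp
  qed
  obtain C0 where "C0 \<in> C" using assms(1) unfolding is_cycle_def by blast
  moreover obtain u where "u \<in> C0" using assms(3,4) \<open>C0 \<in> C\<close> by blast
  ultimately obtain C0 u where "C0 \<in> C" "u \<in> C0" by blast
  hence uS: "u \<in> ?S" by blast
  have "u \<in> \<Union>D" "z \<in> \<Union>D" using uS assms(3) e z by blast+
  moreover have conn: "\<forall>a\<in>\<Union>D. \<forall>b\<in>\<Union>D. (a, b) \<in> {(x, y). {x, y} \<in> D}\<^sup>*"
    using assms(2) unfolding is_cycle_def by blast
  ultimately have "(u, z) \<in> {(x, y). {x, y} \<in> D}\<^sup>*" by blast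
  hence "z \<in> ?S" using uS
  proof (induction rule: rtrancl_induct)
    case base then show ?case .
  next
    case (step y y')
    hence "y \<in> ?S" by blast
    have "{y, y'} \<in> {e\<in>D. y \<in> e}" using step by simp
    hence "{y,y'} \<in> C" using loc[OF \<open>y\<in>?S\<close>] by blast
    then show ?case by blast
  qed
  with zS show False by blast
qed


lemma four_elems: assumes "finite S" "card S = 4" "a\<in>S" "b\<in>S" "c\<in>S" "d\<in>S"
  "a\<noteq>b" "a\<noteq>c" "a\<noteq>d" "b\<noteq>c" "b\<noteq>d" "c\<noteq>d"
  shows "S = {a,b,c,d}"
proof -
  have "card {a,b,c,d} = 4" using assms by simp
  moreover have "{a,b,c,d} \<subseteq> S" using assms by blast
  ultimately show ?thesis using card_subset_eq[OF assms(1)] assms(2) by metis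
qed

context arg begin

definition N :: "'a \<Rightarrow> 'a set" where "N v = {w. {v,w} \<in> E}"
definition K :: "'a \<Rightarrow> ('a \<Rightarrow> 'a) set" where "K v = {\<sigma>\<in>A. \<sigma> v = v}"

lemma N_edges: "{e\<in>E. v \<in> e} = (\<lambda>w. {v,w}) ` N v"
proof (rule equalityI; rule subsetI)
  fix e assume "e \<in> {e\<in>E. v \<in> e}"
  then obtain a b where ab: "e = {a,b}" "e\<in>E" "v\<in>e" using E_edge by blast
  then have "e = {v, (if a = v then b else a)}" by auto
  moreover have "(if a = v then b else a) \<in> N v" using ab calculation by (simp add: N_def)
  ultimately show "e \<in> (\<lambda>w. {v,w}) ` N v" by blast
qed (auto simp: N_def)

lemma card_N: assumes "v\<in>V" shows "card (N v) = 4" "finite (N v)"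
proof -
  have "inj_on (\<lambda>w. {v,w}) (N v)" by (auto simp: inj_on_def doubleton_eq_iff N_def dest: E_V)
  moreover have "card {e\<in>E. v \<in> e} = 4" using tet assms by (simp add: tetravalent_def)
  ultimately show c: "card (N v) = 4" using N_edges card_image by metis
  then show "finite (N v)" using card.infinite by force
qed

lemma N_V: "w \<in> N v \<Longrightarrow> w \<in> V \<and> v \<in> V \<and> v \<noteq> w" by (auto simp: N_def dest: E_V)

lemma A_fix: "\<sigma>\<in>A \<Longrightarrow> {u,w}\<in>E \<Longrightarrow> \<sigma> u = u \<Longrightarrow> \<sigma> w = w \<Longrightarrow> \<sigma> = (\<lambda>x\<in>V. x)"
  using A_uniq[OF _ A_id] E_V by auto

lemma A_invol: assumes "\<sigma>\<in>A" "{u,w}\<in>E" "\<sigma> (\<sigma> u) = u" "\<sigma> (\<sigma> w) = w"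
  shows "\<forall>x\<in>V. \<sigma> (\<sigma> x) = x"
proof -
  have "compose V \<sigma> \<sigma> \<in> A" using A_comp assms by blast
  moreover have "compose V \<sigma> \<sigma> u = u" "compose V \<sigma> \<sigma> w = w" using assms E_V[OF assms(2)]
    by (auto simp: compose_def)
  ultimately have "compose V \<sigma> \<sigma> = (\<lambda>x\<in>V. x)" using A_fix assms(2) by blast
  then show ?thesis by (metis compose_eq restrict_apply')
qed

lemma K_bij: assumes "{v,w}\<in>E" shows "bij_betw (\<lambda>\<kappa>. \<kappa> w) (K v) (N v)"
proof -
  have "inj_on (\<lambda>\<kappa>. \<kappa> w) (K v)"
    using A_uniq assms by (auto simp: inj_on_def K_def)
  moreover have "(\<lambda>\<kappa>. \<kappa> w) ` K v \<subseteq> N v"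
    using A_edge assms by (force simp: K_def N_def)
  moreover have "N v \<subseteq> (\<lambda>\<kappa>. \<kappa> w) ` K v"
  proof
    fix w' assume "w' \<in> N v"
    then obtain \<sigma> where "\<sigma>\<in>A" "\<sigma> v = v" "\<sigma> w = w'" using A_ex[OF assms] by (auto simp: N_def)
    then show "w' \<in> (\<lambda>\<kappa>. \<kappa> w) ` K v" by (auto simp: K_def)
  qed
  ultimately show ?thesis by (simp add: bij_betw_def)
qed

lemma K_A: "\<kappa> \<in> K v \<Longrightarrow> \<kappa> \<in> A" by (simp add: K_def)

end

locale arc0 = arg +
  fixes v0 w0 assumes e0: "{v0,w0} \<in> E"
begin

definition t where "t = (SOME \<sigma>. \<sigma>\<in>A \<and> \<sigma> v0 = w0 \<and> \<sigma> w0 = v0)"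

lemma t: "t\<in>A" "t v0 = w0" "t w0 = v0" "\<forall>x\<in>V. t (t x) = x"
proof -
  have "\<exists>\<sigma>. \<sigma>\<in>A \<and> \<sigma> v0 = w0 \<and> \<sigma> w0 = v0" using A_ex[OF e0 E_sym[OF e0]] by blast
  then have h: "t\<in>A \<and> t v0 = w0 \<and> t w0 = v0" unfolding t_def by (rule someI_ex)
  then show "t\<in>A" "t v0 = w0" "t w0 = v0" by auto
  show "\<forall>x\<in>V. t (t x) = x" using A_invol[OF _ e0] h by auto
qed

lemma v0V: "v0 \<in> V" and w0V: "w0 \<in> V" and v0w0: "v0 \<noteq> w0" using E_V[OF e0] by auto

definition good :: "('a \<Rightarrow> 'a) \<Rightarrow> bool" where
  "good \<kappa> \<longleftrightarrow> \<kappa> \<in> K v0 \<and> (\<forall>x\<in>V. \<kappa> (\<kappa> x) = x) \<and> \<kappa> w0 \<noteq> w0"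

definition xw :: "('a \<Rightarrow> 'a) \<Rightarrow> nat \<Rightarrow> 'a" where "xw \<kappa> k = ((t \<circ> \<kappa>) ^^ k) v0"

definition ordk :: "('a \<Rightarrow> 'a) \<Rightarrow> nat" where "ordk \<kappa> = (LEAST n. 0 < n \<and> xw \<kappa> n = v0)"

definition fc :: "('a \<Rightarrow> 'a) \<Rightarrow> 'a set set" where "fc \<kappa> = cyc (xw \<kappa>)"

definition R :: "('a \<Rightarrow> 'a) \<Rightarrow> nat \<Rightarrow> 'a \<Rightarrow> 'a" where "R \<kappa> k = restrict ((t \<circ> \<kappa>) ^^ k) V"

end

locale gk = arc0 +
  fixes \<kappa> assumes gd: "good \<kappa>"
begin

abbreviation "r \<equiv> t \<circ> \<kappa>"
abbreviation "x \<equiv> xw \<kappa>"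
abbreviation "n \<equiv> ordk \<kappa>"

lemma kA: "\<kappa> \<in> A" and kv0: "\<kappa> v0 = v0" and kk: "\<forall>y\<in>V. \<kappa> (\<kappa> y) = y" and kw0: "\<kappa> w0 \<noteq> w0"
  using gd by (auto simp: good_def K_def)

lemma r_bij: "bij_betw r V V"
  using A_bij[OF kA] A_bij[OF t(1)] bij_betw_trans by blast

lemma rpow_bij: "bij_betw (r ^^ k) V V" using bij_betw_funpow[OF r_bij] .

lemma x_V: "x k \<in> V"
  using rpow_bij v0V bij_betwE unfolding xw_def by blast

lemma x_Suc: "x (Suc k) = t (\<kappa> (x k))" by (simp add: xw_def)
lemma x_0: "x 0 = v0" by (simp add: xw_def)
lemma x_1: "x (Suc 0) = w0" by (simp add: xw_def kv0 t)

lemma x_add: "x (a + b) = (r ^^ a) (x b)" by (simp add: xw_def funpow_add)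

lemma x_edge: "{x k, x (Suc k)} \<in> E"
proof (induction k)
  case 0 then show ?case using e0 x_0 x_1 by simp
next
  case (Suc k)
  have "{\<kappa> (x k), \<kappa> (x (Suc k))} \<in> E" using A_edge[OF kA Suc] .
  then have "{t (\<kappa> (x k)), t (\<kappa> (x (Suc k)))} \<in> E" using A_edge[OF t(1)] by blast
  then show ?case by (simp add: x_Suc)
qed

lemma rpow_inj: "a \<in> V \<Longrightarrow> b \<in> V \<Longrightarrow> (r ^^ k) a = (r ^^ k) b \<Longrightarrow> a = b"
  using rpow_bij by (metis bij_betw_iff_bijections)

lemma x_back: assumes "i < j" "x i = x j" shows "x (j - i) = v0"
proof -
  have "x j = (r ^^ i) (x (j - i))" using x_add[of i "j-i"] assms by simp
  moreover have "x i = (r ^^ i) v0" using x_add[of i 0] x_0 by simp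
  ultimately show ?thesis using rpow_inj x_V v0V assms by metis
qed

lemma ex_period: "\<exists>m. 0 < m \<and> x m = v0"
proof -
  have "x ` UNIV \<subseteq> V" using x_V by blast
  hence "finite (x ` UNIV)" using finV finite_subset by blast
  hence "\<not> inj x" using finite_imageD by blast
  then obtain i j where "i \<noteq> j" "x i = x j" unfolding inj_def by blast
  then show ?thesis using x_back
    by (metis nat_neq_iff zero_less_diff)
qed

lemma n_pos: "0 < n" and x_n: "x n = v0"
  using LeastI_ex[OF ex_period] unfolding ordk_def by auto

lemma n_min: "0 < m \<Longrightarrow> m < n \<Longrightarrow> x m \<noteq> v0"
  unfolding ordk_def using not_less_Least by blast

lemma x_per: "x (k + n) = x k"
  using x_add[of k n] x_n x_add[of k 0] x_0 by simp

lemma x_inj: "inj_on x {..<n}"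
proof (rule inj_onI)
  fix i j assume ij: "i \<in> {..<n}" "j \<in> {..<n}" "x i = x j"
  show "i = j"
  proof (rule ccontr)
    assume "i \<noteq> j"
    then consider "i < j" | "j < i" by linarith
    then show False
    proof cases
      case 1
      have "j - i < n" using ij(2) by auto
      then show False using x_back[OF 1 ij(3)] n_min[of "j-i"] 1 by auto
    next
      case 2
      have "i - j < n" using ij(1) by auto
      then show False using x_back[OF 2 ij(3)[symmetric]] n_min[of "i-j"] 2 by auto
    qed
  qed
qed

lemma x_last: "x (n - 1) = \<kappa> w0"
proof -
  have "r (x (n-1)) = x n" using x_Suc[of "n-1"] n_pos by simp
  also have "\<dots> = v0" by (rule x_n)
  also have "\<dots> = r (\<kappa> w0)" using kk w0V t by simp
  finally have "r (x (n-1)) = r (\<kappa> w0)" .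
  moreover have "\<kappa> w0 \<in> V" using A_V[OF kA w0V] .
  ultimately show ?thesis using rpow_inj[of _ _ 1] x_V by simp
qed

lemma n3: "3 \<le> n"
proof -
  have "n \<noteq> 1" using x_n x_1 v0w0 by auto
  moreover have "n \<noteq> 2" using x_last x_1 kw0 by auto
  ultimately show ?thesis using n_pos by linarith
qed

lemma cw: "cwalk E n x"
  using n3 x_per x_inj x_edge by (simp add: cwalk_def)

lemma fc_cycle: "is_cycle E (fc \<kappa>)"
  unfolding fc_def using cwalk_cycle[OF cw] .

lemma fc_E: "fc \<kappa> \<subseteq> E" using fc_cycle by (simp add: is_cycle_def)

lemma fc_at: "{e\<in>fc \<kappa>. v0 \<in> e} = {{v0,w0}, {v0, \<kappa> w0}}" "{v0,w0} \<noteq> {v0, \<kappa> w0}"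
proof -
  have a: "x (0 + n - 1) = \<kappa> w0" using x_last by simp
  show "{e\<in>fc \<kappa>. v0 \<in> e} = {{v0,w0}, {v0, \<kappa> w0}}"
    using cwalk_at(1)[OF cw, of 0] x_0 x_1 a unfolding fc_def by (simp add: insert_commute)
  show "{v0,w0} \<noteq> {v0, \<kappa> w0}" using kw0 v0w0 by (auto simp: doubleton_eq_iff)
qed

lemma e0_fc: "{v0,w0} \<in> fc \<kappa>" and e1_fc: "{v0, \<kappa> w0} \<in> fc \<kappa>"
  using fc_at(1) by blast+

lemma fc_subV: "\<forall>e\<in>fc \<kappa>. e \<subseteq> V" using fc_E E_sub by blast

lemma fc_r: "face_image r (fc \<kappa>) = fc \<kappa>"
proof -
  have "r \<circ> x = (\<lambda>k. x (Suc k))" by (rule ext) (simp add: x_Suc)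
  then show ?thesis unfolding fc_def face_image_cyc using cyc_shift[OF cw] by simp
qed

lemma s_x: "\<kappa> (t (x (Suc m))) = x m"
  using x_Suc[of m] t(4) kk x_V A_V[OF kA] by simp

lemma kx: "\<kappa> (x k) = x (k * (n - 1))"
proof (induction k)
  case 0 then show ?case using x_0 kv0 by simp
next
  case (Suc k)
  have "\<kappa> (x (Suc k)) = \<kappa> (t (\<kappa> (x k)))" using x_Suc by simp
  also have "\<dots> = \<kappa> (t (x (k * (n-1))))" using Suc by simp
  also have "x (k * (n-1)) = x (Suc (k * (n-1) + n - 1))"
    using x_per[of "k*(n-1)"] n_pos by simp
  also have "\<kappa> (t (x (Suc (k * (n-1) + n - 1)))) = x (k * (n-1) + n - 1)" by (rule s_x)
  also have "k * (n-1) + n - 1 = Suc k * (n-1)" using n_pos by simp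
  finally show ?case .
qed

lemma face_inv_eq: assumes "\<forall>y\<in>V. \<sigma> (\<sigma> y) = y" "\<forall>e\<in>f. e \<subseteq> V" "face_image \<sigma> f \<subseteq> f"
  shows "face_image \<sigma> f = f"
proof -
  have "face_image \<sigma> (face_image \<sigma> f) = face_image (\<sigma> \<circ> \<sigma>) f" by (rule face_image_comp)
  also have "\<dots> = f" using face_image_id[OF assms(2)] assms(1) by simp
  finally have "f \<subseteq> face_image \<sigma> f" using assms(3) unfolding face_image_def by blast
  then show ?thesis using assms(3) by blast
qed

lemma fc_k: "face_image \<kappa> (fc \<kappa>) = fc \<kappa>"
proof (rule face_inv_eq[OF kk fc_subV])
  show "face_image \<kappa> (fc \<kappa>) \<subseteq> fc \<kappa>"
  proof
    fix e assume "e \<in> face_image \<kappa> (fc \<kappa>)"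
    then obtain k where e: "e = {\<kappa> (x k), \<kappa> (x (Suc k))}"
      by (auto simp: face_image_def fc_def cyc_def)
    let ?a = "k * (n-1)"
    have "Suc k * (n-1) = (?a + n - 1)" using n_pos by simp
    moreover have "x ?a = x (Suc (?a + n - 1))" using x_per[of ?a] n_pos by simp
    ultimately have "e = {x (?a + n - 1), x (Suc (?a + n - 1))}" using e kx by auto
    then show "e \<in> fc \<kappa>" unfolding fc_def cyc_def by blast
  qed
qed

lemma fc_t: "face_image t (fc \<kappa>) = fc \<kappa>"
proof -
  have "face_image t (fc \<kappa>) = face_image (r \<circ> \<kappa>) (fc \<kappa>)"
    using face_image_cong[OF fc_subV] kk by simp
  also have "\<dots> = face_image r (face_image \<kappa> (fc \<kappa>))" by (simp add: face_image_comp)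
  also have "\<dots> = fc \<kappa>" using fc_k fc_r by simp
  finally show ?thesis .
qed

lemma R_A: "R \<kappa> k \<in> A"
proof (induction k)
  case 0
  have "R \<kappa> 0 = (\<lambda>x\<in>V. x)" by (rule ext) (simp add: R_def)
  then show ?case using A_id by metis
next
  case (Suc k)
  have "R \<kappa> (Suc k) = compose V t (compose V \<kappa> (R \<kappa> k))"
    by (rule ext) (simp add: R_def compose_def)
  then show ?case using A_comp[OF t(1) A_comp[OF kA Suc]] by simp
qed

lemma R_fc: "face_image (R \<kappa> k) (fc \<kappa>) = fc \<kappa>"
proof -
  have "face_image (R \<kappa> k) (fc \<kappa>) = face_image (r ^^ k) (fc \<kappa>)"
    using face_image_cong[OF fc_subV] by (simp add: R_def)
  also have "\<dots> = fc \<kappa>"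
  proof (induction k)
    case 0 then show ?case by (simp add: face_image_def)
  next
    case (Suc k)
    have "face_image (r ^^ Suc k) (fc \<kappa>) = face_image r (face_image (r ^^ k) (fc \<kappa>))"
      by (simp only: funpow.simps(2) face_image_comp)
    also have "\<dots> = face_image r (fc \<kappa>)" using Suc.IH by (simp only:)
    also have "\<dots> = fc \<kappa>" by (rule fc_r)
    finally show ?case .
  qed
  finally show ?thesis .
qed

lemma R_x: "R \<kappa> k v0 = x k" "R \<kappa> k w0 = x (Suc k)"
  using v0V w0V x_add[of k 1] x_1 by (auto simp: R_def xw_def)

lemma fc_stab: assumes "\<sigma>\<in>A" "{v0,w0} \<in> face_image \<sigma> (fc \<kappa>)"
  shows "face_image \<sigma> (fc \<kappa>) = fc \<kappa>"
proof -
  obtain k where k: "{v0,w0} = {\<sigma> (x k), \<sigma> (x (Suc k))}"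
    using assms(2) by (auto simp: face_image_def fc_def cyc_def)
  let ?\<rho> = "compose V \<sigma> (R \<kappa> k)"
  have rA: "?\<rho> \<in> A" using A_comp[OF assms(1) R_A] .
  have rv: "?\<rho> v0 = \<sigma> (x k)" "?\<rho> w0 = \<sigma> (x (Suc k))" using R_x v0V w0V by (auto simp: compose_def)
  have "face_image ?\<rho> (fc \<kappa>) = face_image (\<sigma> \<circ> R \<kappa> k) (fc \<kappa>)"
    using face_image_cong[OF fc_subV] by (simp add: compose_def)
  also have "\<dots> = face_image \<sigma> (fc \<kappa>)" using R_fc by (simp add: face_image_comp[symmetric])
  finally have eq: "face_image ?\<rho> (fc \<kappa>) = face_image \<sigma> (fc \<kappa>)" .
  from k rv consider "?\<rho> v0 = v0" "?\<rho> w0 = w0" | "?\<rho> v0 = w0" "?\<rho> w0 = v0"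
    by (auto simp: doubleton_eq_iff)
  then show ?thesis
  proof cases
    case 1
    then have "?\<rho> = (\<lambda>y\<in>V. y)" using A_fix[OF rA e0] by blast
    then have "face_image ?\<rho> (fc \<kappa>) = fc \<kappa>" using face_image_id[OF fc_subV] by simp
    then show ?thesis using eq by simp
  next
    case 2
    then have "?\<rho> = t" using A_uniq[OF rA t(1) e0] t by simp
    then show ?thesis using eq fc_t by simp
  qed
qed

end

context arg begin

lemma fi_V: "\<sigma>\<in>A \<Longrightarrow> \<forall>e\<in>f. e\<subseteq>V \<Longrightarrow> \<forall>e\<in>face_image \<sigma> f. e \<subseteq> V"
  using A_V by (auto simp: face_image_def)

lemma fi_compose: "\<forall>e\<in>f. e\<subseteq>V \<Longrightarrow> face_image (compose V \<sigma> \<tau>) f = face_image \<sigma> (face_image \<tau> f)"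
  using face_image_cong[of f V "compose V \<sigma> \<tau>" "\<sigma> \<circ> \<tau>"] by (simp add: compose_def face_image_comp)

lemma fi_cancel: assumes "\<forall>x\<in>V. \<sigma>' (\<sigma> x) = x" "\<forall>e\<in>f. e\<subseteq>V"
  shows "face_image \<sigma>' (face_image \<sigma> f) = f"
  using face_image_id[OF assms(2), of "\<sigma>' \<circ> \<sigma>"] assms(1) by (simp add: face_image_comp)

lemma img_cancel: assumes "\<forall>x\<in>V. \<sigma>' (\<sigma> x) = x" "e\<subseteq>V" shows "\<sigma>' ` \<sigma> ` e = e"
proof -
  have "\<sigma>' ` \<sigma> ` e = (\<lambda>x. \<sigma>' (\<sigma> x)) ` e" by (simp add: image_image)
  also have "\<dots> = e" using assms by (simp add: subset_iff)
  finally show ?thesis .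
qed

lemma fi_at: assumes "\<sigma>\<in>A" "\<forall>e\<in>f. e\<subseteq>V" "u\<in>V"
  shows "{e\<in>face_image \<sigma> f. \<sigma> u \<in> e} = face_image \<sigma> {e\<in>f. u\<in>e}"
proof -
  have "\<sigma> u \<in> \<sigma> ` e \<longleftrightarrow> u \<in> e" if "e \<in> f" for e
    using A_inj[OF assms(1)] assms(2,3) that by blast
  then show ?thesis unfolding face_image_def by blast
qed

lemma cwalk_img: assumes "\<sigma>\<in>A" "cwalk E n x" shows "cwalk E n (\<sigma> \<circ> x)"
proof -
  have xV: "x k \<in> V" for k using assms(2) E_V unfolding cwalk_def by blast
  have "inj_on (\<sigma> \<circ> x) {..<n}" using assms(2) A_inj[OF assms(1)] xV
    unfolding cwalk_def inj_on_def by simp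
  then show ?thesis using assms A_edge unfolding cwalk_def by simp
qed

lemma sym_link: "sym (link_rel E F v)"
  unfolding link_rel_def sym_def by blast

end

context arc0 begin

definition orbF :: "'a set set set \<Rightarrow> 'a set set set" where
  "orbF B = {face_image \<sigma> f | \<sigma> f. \<sigma>\<in>A \<and> f\<in>B}"

lemma orbF_inv: assumes "\<sigma>\<in>A" "\<forall>f\<in>B. \<forall>e\<in>f. e\<subseteq>V"
  shows "face_image \<sigma> ` orbF B = orbF B"
proof (rule equalityI; rule subsetI)
  fix g assume "g \<in> face_image \<sigma> ` orbF B"
  then obtain \<tau> f where "\<tau>\<in>A" "f\<in>B" "g = face_image \<sigma> (face_image \<tau> f)"
    by (auto simp: orbF_def)
  then show "g \<in> orbF B" using fi_compose[of f \<sigma> \<tau>] assms A_comp unfolding orbF_def by blast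
next
  fix g assume "g \<in> orbF B"
  then obtain \<tau> f where tf: "\<tau>\<in>A" "f\<in>B" "g = face_image \<tau> f"
    by (auto simp: orbF_def)
  obtain \<sigma>' where s: "\<sigma>'\<in>A" "\<forall>x\<in>V. \<sigma>' (\<sigma> x) = x \<and> \<sigma> (\<sigma>' x) = x"
    using A_inv[OF assms(1)] by (elim bexE) simp
  have "\<forall>e\<in>f. e\<subseteq>V" using tf(2) assms(2) by blast
  then have gV: "\<forall>e\<in>g. e\<subseteq>V" using fi_V[OF tf(1)] tf(3) by simp
  have "\<forall>x\<in>V. \<sigma> (\<sigma>' x) = x" using s by simp
  then have "face_image \<sigma> (face_image \<sigma>' g) = g"
    using fi_cancel[of \<sigma> \<sigma>'] gV by simp
  moreover have "face_image \<sigma>' g \<in> orbF B"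
    using fi_compose[of f \<sigma>' \<tau>] tf s A_comp assms unfolding orbF_def by blast
  ultimately show "g \<in> face_image \<sigma> ` orbF B" by (metis image_eqI)
qed

lemma orbF_mem: assumes "f \<in> B" "\<forall>e\<in>f. e\<subseteq>V" shows "f \<in> orbF B"
proof -
  have "face_image (\<lambda>x\<in>V. x) f = f" by (rule face_image_id[OF assms(2)]) simp
  then have "f = face_image (\<lambda>x\<in>V. x) f \<and> (\<lambda>x\<in>V. x) \<in> A \<and> f \<in> B" using A_id assms(1) by simp
  then show ?thesis unfolding orbF_def by blast
qed

end

locale two = arc0 +
  fixes \<beta> \<gamma> assumes gb: "good \<beta>" and gg: "good \<gamma>" and bg: "\<beta> w0 \<noteq> \<gamma> w0"
begin

interpretation B: gk V E v0 w0 \<beta> by unfold_locales (rule gb)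
interpretation G: gk V E v0 w0 \<gamma> by unfold_locales (rule gg)

abbreviation "F \<equiv> orbF {fc \<beta>, fc \<gamma>}"

lemma Bsub: "\<forall>f\<in>{fc \<beta>, fc \<gamma>}. \<forall>e\<in>f. e\<subseteq>V" using B.fc_subV G.fc_subV by blast

lemma F_inv: "\<sigma>\<in>A \<Longrightarrow> face_image \<sigma> ` F = F" using orbF_inv Bsub by blast

lemma fb_ne: "fc \<beta> \<noteq> fc \<gamma>"
proof
  assume "fc \<beta> = fc \<gamma>"
  then have "{{v0,w0}, {v0, \<beta> w0}} = {{v0,w0}, {v0, \<gamma> w0}}" using B.fc_at(1) G.fc_at(1) by simp
  then show False using bg B.fc_at(2) G.fc_at(2) by (auto simp: doubleton_eq_iff)
qed

lemma F_e0: "{f\<in>F. {v0,w0} \<in> f} = {fc \<beta>, fc \<gamma>}"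
proof (rule equalityI; rule subsetI)
  fix f assume "f \<in> {f\<in>F. {v0,w0} \<in> f}"
  then obtain \<sigma> where "\<sigma>\<in>A" "f = face_image \<sigma> (fc \<beta>) \<or> f = face_image \<sigma> (fc \<gamma>)" "{v0,w0}\<in>f"
    by (auto simp: orbF_def)
  then show "f \<in> {fc \<beta>, fc \<gamma>}" using B.fc_stab G.fc_stab by blast
next
  fix f assume "f \<in> {fc \<beta>, fc \<gamma>}"
  then show "f \<in> {f\<in>F. {v0,w0} \<in> f}" using orbF_mem Bsub B.e0_fc G.e0_fc by blast
qed

lemma F_sub: "\<forall>f\<in>F. \<forall>e\<in>f. e\<subseteq>V" using fi_V Bsub unfolding orbF_def by blast

lemma F_at: assumes "\<sigma>\<in>A"
  shows "{f\<in>F. \<sigma> ` {v0,w0} \<in> f} = {face_image \<sigma> (fc \<beta>), face_image \<sigma> (fc \<gamma>)}"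
    and "face_image \<sigma> (fc \<beta>) \<noteq> face_image \<sigma> (fc \<gamma>)"
proof -
  obtain \<sigma>' where s: "\<sigma>'\<in>A" "\<forall>x\<in>V. \<sigma>' (\<sigma> x) = x \<and> \<sigma> (\<sigma>' x) = x" using A_inv[OF assms] by blast
  have e0V: "{v0,w0} \<subseteq> V" using v0V w0V by simp
  show "{f\<in>F. \<sigma> ` {v0,w0} \<in> f} = {face_image \<sigma> (fc \<beta>), face_image \<sigma> (fc \<gamma>)}"
  proof (rule equalityI; rule subsetI)
    fix g assume g: "g \<in> {f\<in>F. \<sigma> ` {v0,w0} \<in> f}"
    have gV: "\<forall>e\<in>g. e \<subseteq> V" using g F_sub by blast
    have "face_image \<sigma>' g \<in> F" using F_inv[OF s(1)] g by blast
    moreover have "{v0,w0} \<in> face_image \<sigma>' g"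
    proof -
      have "\<sigma>' ` \<sigma> ` {v0,w0} = {v0,w0}" using img_cancel[of \<sigma>' \<sigma> "{v0,w0}"] s e0V by simp
      moreover have "\<sigma> ` {v0,w0} \<in> g" using g by simp
      ultimately show ?thesis unfolding face_image_def by (metis image_eqI)
    qed
    ultimately have "face_image \<sigma>' g \<in> {fc \<beta>, fc \<gamma>}" using F_e0 by blast
    moreover have "face_image \<sigma> (face_image \<sigma>' g) = g" using fi_cancel[of \<sigma> \<sigma>' g] s gV by auto
    ultimately show "g \<in> {face_image \<sigma> (fc \<beta>), face_image \<sigma> (fc \<gamma>)}" by auto
  next
    fix g assume "g \<in> {face_image \<sigma> (fc \<beta>), face_image \<sigma> (fc \<gamma>)}"
    moreover have "face_image \<sigma> (fc \<beta>) \<in> F" "face_image \<sigma> (fc \<gamma>) \<in> F"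
      using assms unfolding orbF_def by blast+
    moreover have "\<sigma> ` {v0,w0} \<in> face_image \<sigma> (fc \<beta>)" "\<sigma> ` {v0,w0} \<in> face_image \<sigma> (fc \<gamma>)"
      using B.e0_fc G.e0_fc unfolding face_image_def by blast+
    ultimately show "g \<in> {f\<in>F. \<sigma> ` {v0,w0} \<in> f}" by blast
  qed
  show "face_image \<sigma> (fc \<beta>) \<noteq> face_image \<sigma> (fc \<gamma>)"
    using fi_cancel[of \<sigma>' \<sigma>] s B.fc_subV G.fc_subV fb_ne by metis
qed

end

lemma fi_mem: "{a,b} \<in> f \<Longrightarrow> {\<sigma> a, \<sigma> b} \<in> face_image \<sigma> f"
  unfolding face_image_def by (metis image_eqI image_empty image_insert)

context two begin

interpretation B: gk V E v0 w0 \<beta> by unfold_locales (rule gb)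
interpretation G: gk V E v0 w0 \<gamma> by unfold_locales (rule gg)

lemma F_cycle: assumes "f \<in> F" shows "is_cycle E f"
proof -
  obtain \<sigma> \<kappa> where s: "\<sigma>\<in>A" "\<kappa> \<in> {\<beta>,\<gamma>}" "f = face_image \<sigma> (fc \<kappa>)"
    using assms unfolding orbF_def by blast
  have "cwalk E (ordk \<kappa>) (xw \<kappa>)" using B.cw G.cw s(2) by blast
  then have "cwalk E (ordk \<kappa>) (\<sigma> \<circ> xw \<kappa>)" using cwalk_img s(1) by blast
  then show ?thesis using cwalk_cycle s(3) face_image_cyc unfolding fc_def by metis
qed

lemma F_E: "f \<in> F \<Longrightarrow> f \<subseteq> E" using F_cycle by (simp add: is_cycle_def)

lemma F_edge2: assumes "e \<in> E" shows "card {f\<in>F. e \<in> f} = 2"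
proof -
  obtain u w where uw: "e = {u,w}" using E_edge[OF assms] by blast
  obtain \<sigma> where s: "\<sigma>\<in>A" "\<sigma> v0 = u" "\<sigma> w0 = w" using A_ex[OF e0] assms uw by blast
  have "\<sigma> ` {v0,w0} = e" using s uw by simp
  then show ?thesis using F_at[OF s(1)] by simp
qed

lemma F_inF: "\<sigma>\<in>A \<Longrightarrow> \<kappa> \<in> {\<beta>,\<gamma>} \<Longrightarrow> face_image \<sigma> (fc \<kappa>) \<in> F"
  unfolding orbF_def by blast

lemma bgw: "\<beta> (\<gamma> w0) \<noteq> w0" "\<beta> (\<gamma> w0) \<noteq> \<beta> w0" "\<beta> (\<gamma> w0) \<noteq> \<gamma> w0"
proof -
  have gV: "\<gamma> w0 \<in> V" using A_V[OF G.kA w0V] .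
  show "\<beta> (\<gamma> w0) \<noteq> w0"
  proof
    assume "\<beta> (\<gamma> w0) = w0"
    then have "\<beta> (\<beta> (\<gamma> w0)) = \<beta> w0" by simp
    then show False using B.kk gV bg by simp
  qed
  show "\<beta> (\<gamma> w0) \<noteq> \<beta> w0" using A_inj[OF B.kA gV w0V] G.kw0 by blast
  show "\<beta> (\<gamma> w0) \<noteq> \<gamma> w0"
  proof
    assume h: "\<beta> (\<gamma> w0) = \<gamma> w0"
    have "{\<gamma> v0, \<gamma> w0} \<in> E" using A_edge[OF G.kA e0] .
    then have "{v0, \<gamma> w0} \<in> E" using G.kv0 by simp
    then have "\<beta> = (\<lambda>x\<in>V. x)" using A_fix[OF B.kA] B.kv0 h by blast
    then show False using B.kw0 w0V by simp
  qed
qed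

lemma link: assumes "v\<in>V"
  shows "\<forall>x\<in>link_nodes E F v. \<forall>y\<in>link_nodes E F v. (x,y) \<in> (link_rel E F v)\<^sup>*"
proof -
  let ?L = "link_rel E F v"
  have "N v \<noteq> {}" using card_N[OF assms] by auto
  then obtain w where w: "{v,w} \<in> E" by (auto simp: N_def)
  obtain \<sigma> where s: "\<sigma>\<in>A" "\<sigma> v0 = v" "\<sigma> w0 = w" using A_ex[OF e0 w] by blast
  define a2 where "a2 = \<sigma> (\<beta> w0)"
  define a3 where "a3 = \<sigma> (\<gamma> w0)"
  define a4 where "a4 = \<sigma> (\<beta> (\<gamma> w0))"
  have bV: "\<beta> w0 \<in> V" and gV: "\<gamma> w0 \<in> V" and bgV: "\<beta> (\<gamma> w0) \<in> V"
    using A_V[OF B.kA] A_V[OF G.kA] w0V by auto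
  have inj: "\<And>a b. a\<in>V \<Longrightarrow> b\<in>V \<Longrightarrow> a \<noteq> b \<Longrightarrow> \<sigma> a \<noteq> \<sigma> b" using A_inj[OF s(1)] by blast
  have d: "w \<noteq> a2" "w \<noteq> a3" "w \<noteq> a4" "a2 \<noteq> a3" "a2 \<noteq> a4" "a3 \<noteq> a4"
    unfolding a2_def a3_def a4_def using inj bV gV bgV w0V bgw B.kw0 G.kw0 bg s(3) by metis+
  have eb0: "{v0, \<beta> w0} \<in> E" "{v0, \<gamma> w0} \<in> E"
    using A_edge[OF B.kA e0] A_edge[OF G.kA e0] B.kv0 G.kv0 by auto
  have "{v0, \<beta> (\<gamma> w0)} \<in> E" using A_edge[OF B.kA eb0(2)] B.kv0 by simp
  note eb = eb0 this
  have inN: "w \<in> N v" "a2 \<in> N v" "a3 \<in> N v" "a4 \<in> N v"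
    using w A_edge[OF s(1)] eb s(2) unfolding a2_def a3_def a4_def N_def by force+
  have Nv: "N v = {w, a2, a3, a4}"
    using four_elems[OF card_N(2)[OF assms] card_N(1)[OF assms] inN d] .
  have st: "(Inl e, Inr f) \<in> ?L" "(Inr f, Inl e) \<in> ?L" if "e\<in>E" "f\<in>F" "v\<in>e" "e\<in>f" for e f
    using that unfolding link_rel_def by blast+
  let ?hub = "Inl {v,w} :: 'a set + 'a set set"
  have fb: "face_image \<sigma> (fc \<beta>) \<in> F" and fg: "face_image \<sigma> (fc \<gamma>) \<in> F"
    using F_inF s(1) by auto
  have cA: "compose V \<sigma> \<beta> \<in> A" using A_comp[OF s(1) B.kA] .
  have fbg: "face_image (compose V \<sigma> \<beta>) (fc \<gamma>) \<in> F" using F_inF[OF cA] by auto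
  have m1: "{v,w} \<in> face_image \<sigma> (fc \<beta>)" "{v,a2} \<in> face_image \<sigma> (fc \<beta>)"
    using fi_mem[OF B.e0_fc, of \<sigma>] fi_mem[OF B.e1_fc, of \<sigma>] s unfolding a2_def by auto
  have m2: "{v,w} \<in> face_image \<sigma> (fc \<gamma>)" "{v,a3} \<in> face_image \<sigma> (fc \<gamma>)"
    using fi_mem[OF G.e0_fc, of \<sigma>] fi_mem[OF G.e1_fc, of \<sigma>] s unfolding a3_def by auto
  have m3: "{v,a2} \<in> face_image (compose V \<sigma> \<beta>) (fc \<gamma>)" "{v,a4} \<in> face_image (compose V \<sigma> \<beta>) (fc \<gamma>)"
    using fi_mem[OF G.e0_fc, of "compose V \<sigma> \<beta>"] fi_mem[OF G.e1_fc, of "compose V \<sigma> \<beta>"] s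
      v0V w0V gV B.kv0 unfolding a2_def a4_def by (auto simp: compose_def)
  have E2: "{v,a2} \<in> E" "{v,a3} \<in> E" "{v,a4} \<in> E" using inN by (auto simp: N_def)
  have r2: "(Inl {v,a2}, ?hub) \<in> ?L\<^sup>*"
  proof -
    have "(Inl {v,a2}, Inr (face_image \<sigma> (fc \<beta>))) \<in> ?L" using st(1)[OF E2(1) fb _ m1(2)] by simp
    moreover have "(Inr (face_image \<sigma> (fc \<beta>)), ?hub) \<in> ?L" using st(2)[OF w fb _ m1(1)] by simp
    ultimately show ?thesis by (meson converse_rtrancl_into_rtrancl r_into_rtrancl)
  qed
  have r3: "(Inl {v,a3}, ?hub) \<in> ?L\<^sup>*"
  proof -
    have "(Inl {v,a3}, Inr (face_image \<sigma> (fc \<gamma>))) \<in> ?L" using st(1)[OF E2(2) fg _ m2(2)] by simp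
    moreover have "(Inr (face_image \<sigma> (fc \<gamma>)), ?hub) \<in> ?L" using st(2)[OF w fg _ m2(1)] by simp
    ultimately show ?thesis by (meson converse_rtrancl_into_rtrancl r_into_rtrancl)
  qed
  have r4: "(Inl {v,a4}, ?hub) \<in> ?L\<^sup>*"
  proof -
    have "(Inl {v,a4}, Inr (face_image (compose V \<sigma> \<beta>) (fc \<gamma>))) \<in> ?L" using st(1)[OF E2(3) fbg _ m3(2)] by simp
    moreover have "(Inr (face_image (compose V \<sigma> \<beta>) (fc \<gamma>)), Inl {v,a2}) \<in> ?L" using st(2)[OF E2(1) fbg _ m3(1)] by simp
    ultimately show ?thesis using r2 by (meson converse_rtrancl_into_rtrancl)
  qed
  have edge_hub: "(Inl e, ?hub) \<in> ?L\<^sup>*" if eh: "e \<in> E" "v \<in> e" for e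
  proof -
    obtain a b where ab: "e = {a,b}" using E_edge[OF eh(1)] by blast
    then have ee: "e = {v, if a = v then b else a}" using eh by auto
    have "{v, if a = v then b else a} \<in> E" using eh(1) ee by simp
    then have "(if a = v then b else a) \<in> N v" unfolding N_def by simp
    then obtain c where c: "c \<in> N v" "e = {v,c}" using ee by blast
    then have "c = w \<or> c = a2 \<or> c = a3 \<or> c = a4" using Nv by blast
    then have "e = {v,w} \<or> e = {v,a2} \<or> e = {v,a3} \<or> e = {v,a4}" using c(2) by blast
    then show ?thesis using r2 r3 r4 by auto
  qed
  have all_hub: "(x, ?hub) \<in> ?L\<^sup>*" if "x \<in> link_nodes E F v" for x
  proof -
    from that consider e where "x = Inl e" "e \<in> E" "v \<in> e" | f where "x = Inr f" "f \<in> F" "v \<in> \<Union>f"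
      unfolding link_nodes_def by blast
    then show ?thesis
    proof cases
      case 1 then show ?thesis using edge_hub by simp
    next
      case 2
      then obtain e where e: "e \<in> f" "v \<in> e" by blast
      have eE: "e \<in> E" using F_E[OF 2(2)] e(1) by blast
      have "(x, Inl e) \<in> ?L" using st(2)[OF eE 2(2) e(2) e(1)] 2(1) by simp
      then show ?thesis using edge_hub[OF eE e(2)] by (meson converse_rtrancl_into_rtrancl)
    qed
  qed
  have sy: "sym (?L\<^sup>*)" using sym_link sym_rtrancl by blast
  show ?thesis
  proof (intro ballI)
    fix x y assume "x \<in> link_nodes E F v" "y \<in> link_nodes E F v"
    then have "(x, ?hub) \<in> ?L\<^sup>*" "(?hub, y) \<in> ?L\<^sup>*" using all_hub sy by (auto dest: symD)
    then show "(x,y) \<in> ?L\<^sup>*" by simp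
  qed
qed

lemma F_polytopal: "polytopal_map V E F"
  using tet F_cycle F_edge2 link unfolding polytopal_map_def tetravalent_def by blast

end

context two begin

interpretation B: gk V E v0 w0 \<beta> by unfold_locales (rule gb)
interpretation G: gk V E v0 w0 \<gamma> by unfold_locales (rule gg)

lemma mapA: "map_auts V E F = A" using F_inv by (auto simp: map_auts_def)

lemma orbit_eq: "flag_orbit V E F \<Phi> = (\<lambda>\<sigma>. flag_act \<sigma> \<Phi>) ` A"
  by (simp add: flag_orbit_def mapA)

lemma fa_base: "flag_act \<sigma> (v0,{v0,w0},f) = (\<sigma> v0, {\<sigma> v0, \<sigma> w0}, face_image \<sigma> f)"
  by (simp add: flag_act_def)

lemma fa_comp: assumes "\<forall>e\<in>f. e\<subseteq>V"
  shows "flag_act \<tau> (flag_act \<sigma> (v0,{v0,w0},f)) = flag_act (compose V \<tau> \<sigma>) (v0,{v0,w0},f)"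
  using fi_compose[OF assms, of \<tau> \<sigma>] v0V w0V by (simp add: flag_act_def compose_def)

lemma orbit_act: assumes "\<sigma>\<in>A" "\<forall>e\<in>f. e\<subseteq>V"
  shows "flag_orbit V E F (flag_act \<sigma> (v0,{v0,w0},f)) = flag_orbit V E F (v0,{v0,w0},f)"
  unfolding orbit_eq
proof (rule equalityI; rule subsetI)
  fix \<Psi> assume "\<Psi> \<in> (\<lambda>\<tau>. flag_act \<tau> (flag_act \<sigma> (v0, {v0, w0}, f))) ` A"
  then obtain \<tau> where "\<tau>\<in>A" "\<Psi> = flag_act \<tau> (flag_act \<sigma> (v0, {v0, w0}, f))" by blast
  then show "\<Psi> \<in> (\<lambda>\<tau>. flag_act \<tau> (v0, {v0, w0}, f)) ` A"
    using fa_comp[OF assms(2)] A_comp[OF _ assms(1)] by blast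
next
  fix \<Psi> assume "\<Psi> \<in> (\<lambda>\<tau>. flag_act \<tau> (v0, {v0, w0}, f)) ` A"
  then obtain \<rho> where r: "\<rho>\<in>A" "\<Psi> = flag_act \<rho> (v0, {v0, w0}, f)" by blast
  obtain \<sigma>' where s: "\<sigma>'\<in>A" "\<forall>x\<in>V. \<sigma>' (\<sigma> x) = x \<and> \<sigma> (\<sigma>' x) = x"
    using A_inv[OF assms(1)] by (elim bexE) simp
  have cA: "compose V \<rho> \<sigma>' \<in> A" using A_comp[OF r(1) s(1)] .
  have "compose V (compose V \<rho> \<sigma>') \<sigma> = \<rho>"
    using A_eq[OF A_comp[OF cA assms(1)] r(1)] s A_V[OF assms(1)] by (simp add: compose_def)
  then have "\<Psi> = flag_act (compose V \<rho> \<sigma>') (flag_act \<sigma> (v0, {v0, w0}, f))"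
    using r(2) fa_comp[OF assms(2)] by simp
  then show "\<Psi> \<in> (\<lambda>\<tau>. flag_act \<tau> (flag_act \<sigma> (v0, {v0, w0}, f))) ` A" using cA by blast
qed

lemma fcV: "\<kappa> \<in> {\<beta>,\<gamma>} \<Longrightarrow> \<forall>e\<in>fc \<kappa>. e\<subseteq>V" using Bsub by blast

lemma flags_repr: assumes "\<Phi> \<in> flags V E F"
  shows "\<exists>\<sigma>\<in>A. \<exists>\<kappa>\<in>{\<beta>,\<gamma>}. \<Phi> = flag_act \<sigma> (v0,{v0,w0},fc \<kappa>)"
proof -
  obtain v e f where Phi: "\<Phi> = (v,e,f)" "v\<in>V" "e\<in>E" "f\<in>F" "v\<in>e" "e\<in>f"
    using assms unfolding flags_def by blast
  obtain a b where "e = {a,b}" using E_edge[OF Phi(3)] by blast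
  then obtain w where ew: "e = {v,w}" using Phi(5) by (metis insert_commute insertE singletonD)
  obtain \<sigma> where s: "\<sigma>\<in>A" "\<sigma> v0 = v" "\<sigma> w0 = w" using A_ex[OF e0] Phi(3) ew by blast
  have "\<sigma> ` {v0,w0} = e" using s ew by simp
  then have "f \<in> {face_image \<sigma> (fc \<beta>), face_image \<sigma> (fc \<gamma>)}" using F_at(1)[OF s(1)] Phi by blast
  then show ?thesis using s Phi(1) ew by (auto simp: fa_base)
qed

lemma base_flag: "\<kappa> \<in> {\<beta>,\<gamma>} \<Longrightarrow> (v0,{v0,w0},fc \<kappa>) \<in> flags V E F"
  using orbF_mem[of "fc \<kappa>" "{fc \<beta>, fc \<gamma>}"] fcV B.e0_fc G.e0_fc v0V e0
  unfolding flags_def by auto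

lemma base_in: "\<forall>e\<in>f. e\<subseteq>V \<Longrightarrow> (v0,{v0,w0},f) \<in> flag_orbit V E F (v0,{v0,w0},f)"
proof -
  assume a: "\<forall>e\<in>f. e\<subseteq>V"
  have "flag_act (\<lambda>x\<in>V. x) (v0,{v0,w0},f) = (v0,{v0,w0},f)"
    using face_image_id[OF a, of "\<lambda>x\<in>V. x"] v0V w0V by (simp add: fa_base)
  then show ?thesis unfolding orbit_eq using A_id by (metis image_eqI)
qed

lemma act_eq_arc: assumes "\<tau>\<in>A" "\<sigma>\<in>A" "flag_act \<tau> (v0,{v0,w0},f) = flag_act \<sigma> (v0,{v0,w0},g)"
  shows "\<tau> = \<sigma>" "face_image \<sigma> f = face_image \<sigma> g"
proof -
  have h: "\<tau> v0 = \<sigma> v0" "{\<tau> v0, \<tau> w0} = {\<sigma> v0, \<sigma> w0}" "face_image \<tau> f = face_image \<sigma> g"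
    using assms(3) by (auto simp: fa_base)
  have "\<tau> w0 = \<sigma> w0"
  proof (rule ccontr)
    assume "\<tau> w0 \<noteq> \<sigma> w0"
    then have "\<tau> w0 = \<sigma> v0" using h(2) by (auto simp: doubleton_eq_iff)
    then have "\<tau> w0 = \<tau> v0" using h(1) by simp
    then show False using A_inj[OF assms(1) w0V v0V] v0w0 by simp
  qed
  then show t: "\<tau> = \<sigma>" using A_uniq[OF assms(1,2) e0] h(1) by simp
  show "face_image \<sigma> f = face_image \<sigma> g" using h(3) t by simp
qed

lemma bg_ne: "\<beta> \<noteq> \<gamma>" using bg by auto

lemma F_class: "class_2_01 V E F"
proof -
  let ?O = "flag_orbit V E F"
  let ?b = "\<lambda>\<kappa>. (v0,{v0,w0},fc \<kappa>)"
  have img: "?O ` flags V E F = {?O (?b \<beta>), ?O (?b \<gamma>)}"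
  proof (rule equalityI; rule subsetI)
    fix Ob assume "Ob \<in> ?O ` flags V E F"
    then obtain \<Phi> where "\<Phi> \<in> flags V E F" "Ob = ?O \<Phi>" by blast
    then obtain \<sigma> \<kappa> where "\<sigma>\<in>A" "\<kappa>\<in>{\<beta>,\<gamma>}" "Ob = ?O (flag_act \<sigma> (?b \<kappa>))" using flags_repr by blast
    then show "Ob \<in> {?O (?b \<beta>), ?O (?b \<gamma>)}" using orbit_act fcV by auto
  next
    fix Ob assume "Ob \<in> {?O (?b \<beta>), ?O (?b \<gamma>)}"
    then show "Ob \<in> ?O ` flags V E F" using base_flag by blast
  qed
  have ne: "?O (?b \<beta>) \<noteq> ?O (?b \<gamma>)"
  proof
    assume h: "?O (?b \<beta>) = ?O (?b \<gamma>)"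
    have "?b \<gamma> \<in> ?O (?b \<beta>)" using base_in[OF fcV, of \<gamma>] h by simp
    then obtain \<tau> where "\<tau>\<in>A" "flag_act \<tau> (?b \<beta>) = ?b \<gamma>" unfolding orbit_eq by (metis (no_types, lifting) imageE)
    moreover have "?b \<gamma> = flag_act (\<lambda>x\<in>V. x) (?b \<gamma>)"
      using face_image_id[OF fcV, of \<gamma> "\<lambda>x\<in>V. x"] v0V w0V by (simp add: fa_base)
    ultimately have "face_image (\<lambda>x\<in>V. x) (fc \<beta>) = face_image (\<lambda>x\<in>V. x) (fc \<gamma>)"
      using act_eq_arc(2)[OF _ A_id] by metis
    then show False using face_image_id[OF fcV, of _ "\<lambda>x\<in>V. x"] fb_ne by simp
  qed
  have card: "card (?O ` flags V E F) = 2" using img ne by simp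
  have props: "flag0 \<Phi> \<in> ?O \<Phi> \<and> flag1 \<Phi> \<in> ?O \<Phi> \<and> flag2 F \<Phi> \<notin> ?O \<Phi>" if phi: "\<Phi> \<in> flags V E F" for \<Phi>
  proof -
    obtain \<sigma> \<kappa> where s: "\<sigma>\<in>A" "\<kappa>\<in>{\<beta>,\<gamma>}" "\<Phi> = flag_act \<sigma> (?b \<kappa>)" using flags_repr[OF phi] by blast
    define \<kappa>' where "\<kappa>' = (if \<kappa> = \<beta> then \<gamma> else \<beta>)"
    have k': "\<kappa>' \<in> {\<beta>,\<gamma>}" "{\<kappa>,\<kappa>'} = {\<beta>,\<gamma>}" "fc \<kappa> \<noteq> fc \<kappa>'"
      using s(2) fb_ne bg_ne unfolding \<kappa>'_def by auto
    interpret KK: gk V E v0 w0 \<kappa> using s(2) gb gg by unfold_locales auto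
    have orb: "?O \<Phi> = ?O (?b \<kappa>)" using orbit_act[OF s(1) KK.fc_subV] s(3) by simp
    have vV: "\<sigma> v0 \<in> V" "\<sigma> w0 \<in> V" "\<sigma> v0 \<noteq> \<sigma> w0"
      using A_V[OF s(1)] v0V w0V A_inj[OF s(1) v0V w0V] v0w0 by auto
    have Phi: "\<Phi> = (\<sigma> v0, {\<sigma> v0, \<sigma> w0}, face_image \<sigma> (fc \<kappa>))" using s(3) fa_base by simp
    have "flag0 \<Phi> = (\<sigma> w0, {\<sigma> v0, \<sigma> w0}, face_image \<sigma> (fc \<kappa>))"
    proof -
      have "(THE u. u \<in> {\<sigma> v0, \<sigma> w0} \<and> u \<noteq> \<sigma> v0) = \<sigma> w0"
        using vV by (intro the_equality) auto
      then show ?thesis using Phi by (simp add: flag0_def)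
    qed
    also have "\<dots> = flag_act (compose V \<sigma> t) (?b \<kappa>)"
    proof -
      have "face_image (compose V \<sigma> t) (fc \<kappa>) = face_image \<sigma> (fc \<kappa>)"
        using fi_compose[OF KK.fc_subV] KK.fc_t by simp
      then show ?thesis using t v0V w0V by (auto simp: fa_base compose_def)
    qed
    finally have f0: "flag0 \<Phi> \<in> ?O \<Phi>" using orb A_comp[OF s(1) t(1)] unfolding orbit_eq by blast
    have kwV: "\<kappa> w0 \<in> V" using A_V[OF KK.kA w0V] .
    have "flag1 \<Phi> = (\<sigma> v0, {\<sigma> v0, \<sigma> (\<kappa> w0)}, face_image \<sigma> (fc \<kappa>))"
    proof -
      have at: "{e\<in>face_image \<sigma> (fc \<kappa>). \<sigma> v0 \<in> e} = {{\<sigma> v0, \<sigma> w0}, {\<sigma> v0, \<sigma> (\<kappa> w0)}}"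
        using fi_at[OF s(1) KK.fc_subV v0V] KK.fc_at(1) by (simp add: face_image_def)
      have "{\<sigma> v0, \<sigma> (\<kappa> w0)} \<noteq> {\<sigma> v0, \<sigma> w0}"
        using A_inj[OF s(1) kwV w0V] KK.kw0 by (auto simp: doubleton_eq_iff)
      then have "(THE e'. e' \<in> face_image \<sigma> (fc \<kappa>) \<and> \<sigma> v0 \<in> e' \<and> e' \<noteq> {\<sigma> v0, \<sigma> w0}) = {\<sigma> v0, \<sigma> (\<kappa> w0)}"
        using at by (intro the_equality) blast+
      then show ?thesis using Phi by (simp add: flag1_def)
    qed
    also have "\<dots> = flag_act (compose V \<sigma> \<kappa>) (?b \<kappa>)"
    proof -
      have "face_image (compose V \<sigma> \<kappa>) (fc \<kappa>) = face_image \<sigma> (fc \<kappa>)"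
        using fi_compose[OF KK.fc_subV] KK.fc_k by simp
      then show ?thesis using KK.kv0 v0V w0V by (auto simp: fa_base compose_def)
    qed
    finally have f1: "flag1 \<Phi> \<in> ?O \<Phi>" using orb A_comp[OF s(1) KK.kA] unfolding orbit_eq by blast
    have "flag2 F \<Phi> = (\<sigma> v0, {\<sigma> v0, \<sigma> w0}, face_image \<sigma> (fc \<kappa>'))"
    proof -
      have at: "{f\<in>F. {\<sigma> v0, \<sigma> w0} \<in> f} = {face_image \<sigma> (fc \<kappa>), face_image \<sigma> (fc \<kappa>')}"
        using F_at(1)[OF s(1)] s(2) bg_ne unfolding \<kappa>'_def by (auto simp: insert_commute)
      have ne: "face_image \<sigma> (fc \<kappa>') \<noteq> face_image \<sigma> (fc \<kappa>)"
        using F_at(2)[OF s(1)] s(2) bg_ne unfolding \<kappa>'_def by auto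
      have "(THE g. g \<in> F \<and> {\<sigma> v0, \<sigma> w0} \<in> g \<and> g \<noteq> face_image \<sigma> (fc \<kappa>)) = face_image \<sigma> (fc \<kappa>')"
      proof (rule the_equality)
        show "face_image \<sigma> (fc \<kappa>') \<in> F \<and> {\<sigma> v0, \<sigma> w0} \<in> face_image \<sigma> (fc \<kappa>') \<and> face_image \<sigma> (fc \<kappa>') \<noteq> face_image \<sigma> (fc \<kappa>)"
          using at ne by blast
        show "g = face_image \<sigma> (fc \<kappa>')" if "g \<in> F \<and> {\<sigma> v0, \<sigma> w0} \<in> g \<and> g \<noteq> face_image \<sigma> (fc \<kappa>)" for g
          using that at by blast
      qed
      then show ?thesis using Phi by (simp add: flag2_def)
    qed
    also have "\<dots> = flag_act \<sigma> (?b \<kappa>')" by (simp add: fa_base)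
    finally have f2e: "flag2 F \<Phi> = flag_act \<sigma> (?b \<kappa>')" .
    have f2: "flag2 F \<Phi> \<notin> ?O \<Phi>"
    proof
      assume "flag2 F \<Phi> \<in> ?O \<Phi>"
      then obtain \<tau> where "\<tau>\<in>A" "flag_act \<tau> (?b \<kappa>) = flag_act \<sigma> (?b \<kappa>')"
        using orb f2e unfolding orbit_eq by auto
      then have "face_image \<sigma> (fc \<kappa>) = face_image \<sigma> (fc \<kappa>')" using act_eq_arc(2)[OF _ s(1)] by blast
      moreover have "\<kappa> = \<beta> \<and> \<kappa>' = \<gamma> \<or> \<kappa> = \<gamma> \<and> \<kappa>' = \<beta>" using s(2) bg_ne unfolding \<kappa>'_def by auto
      ultimately show False using F_at(2)[OF s(1)] by metis
    qed
    show ?thesis using f0 f1 f2 by blast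
  qed
  show ?thesis unfolding class_2_01_def using card props by blast
qed

lemma F_valid: "class_2_01_map V E F"
  unfolding class_2_01_map_def using F_polytopal F_class by blast

end

context arc0 begin

lemma act_arc: assumes "\<tau>\<in>A" "\<sigma>\<in>A" "flag_act \<tau> (v0,{v0,w0},f) = (\<sigma> v0, {\<sigma> v0, \<sigma> w0}, g)"
  shows "\<tau> = \<sigma>" "face_image \<tau> f = g"
proof -
  have h: "\<tau> v0 = \<sigma> v0" "{\<tau> v0, \<tau> w0} = {\<sigma> v0, \<sigma> w0}" "face_image \<tau> f = g"
    using assms(3) by (auto simp: flag_act_def)
  have "\<tau> w0 = \<sigma> w0"
  proof (rule ccontr)
    assume "\<tau> w0 \<noteq> \<sigma> w0"
    then have "\<tau> w0 = \<sigma> v0" using h(2) by (auto simp: doubleton_eq_iff)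
    then have "\<tau> w0 = \<tau> v0" using h(1) by simp
    then show False using A_inj[OF assms(1) w0V v0V] v0w0 by simp
  qed
  then show "\<tau> = \<sigma>" using A_uniq[OF assms(1,2) e0] h(1) by simp
  show "face_image \<tau> f = g" using h(3) .
qed

end

locale vm = arc0 +
  fixes F assumes vF: "class_2_01_map V E F"
begin

lemma pm: "polytopal_map V E F" and cl: "class_2_01 V E F"
  using vF by (auto simp: class_2_01_map_def)

lemma F_cyc: "f\<in>F \<Longrightarrow> is_cycle E f" using pm by (simp add: polytopal_map_def)
lemma F_E': "f\<in>F \<Longrightarrow> f \<subseteq> E" using F_cyc by (simp add: is_cycle_def)
lemma F_V: "f\<in>F \<Longrightarrow> \<forall>e\<in>f. e\<subseteq>V" using F_E' E_sub by blast
lemma edge2: "e\<in>E \<Longrightarrow> card {f\<in>F. e\<in>f} = 2" using pm by (simp add: polytopal_map_def)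

lemma two_faces: assumes "e\<in>E" obtains g1 g2 where "g1\<noteq>g2" "{f\<in>F. e\<in>f} = {g1,g2}"
  using edge2[OF assms] by (meson card_2_iff)

lemma id_fa: assumes "v\<in>V" "e \<subseteq> V" "f\<in>F" shows "flag_act (\<lambda>x\<in>V. x) (v,e,f) = (v,e,f)"
proof -
  have "(\<lambda>x\<in>V. x) ` e = e" using assms(2) by (auto simp: image_def subset_iff)
  moreover have "face_image (\<lambda>x\<in>V. x) f = f" using face_image_id[OF F_V[OF assms(3)]] by simp
  ultimately show ?thesis using assms(1) by (simp add: flag_act_def)
qed

lemma id_map: "(\<lambda>x\<in>V. x) \<in> map_auts V E F"
proof -
  have "face_image (\<lambda>x\<in>V. x) f = f" if "f\<in>F" for f using face_image_id[OF F_V[OF that]] by simp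
  then have "face_image (\<lambda>x\<in>V. x) ` F = F" by simp
  then show ?thesis using A_id by (simp add: map_auts_def)
qed

lemma mA: "map_auts V E F = A"
proof (rule equalityI)
  show "map_auts V E F \<subseteq> A" by (auto simp: map_auts_def)
  show "A \<subseteq> map_auts V E F"
  proof
    fix \<tau> assume tA: "\<tau> \<in> A"
    let ?O = "flag_orbit V E F"
    obtain f1 f2 where "f1\<noteq>f2" "{f\<in>F. {v0,w0}\<in>f} = {f1,f2}" using two_faces[OF e0] by blast
    then obtain f where f: "f\<in>F" "{v0,w0}\<in>f" by blast
    let ?\<Phi> = "(v0,{v0,w0},f)"
    have Phi: "?\<Phi> \<in> flags V E F" using f v0V e0 by (simp add: flags_def)
    have e'E: "{\<tau> v0, \<tau> w0} \<in> E" using A_edge[OF tA e0] .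
    have tvV: "\<tau> v0 \<in> V" "{\<tau> v0, \<tau> w0} \<subseteq> V" using A_V[OF tA] v0V w0V by auto
    obtain g1 g2 where g: "g1\<noteq>g2" "{g\<in>F. {\<tau> v0, \<tau> w0}\<in>g} = {g1,g2}" using two_faces[OF e'E] by blast
    let ?\<Psi>1 = "(\<tau> v0, {\<tau> v0, \<tau> w0}, g1)" and ?\<Psi>2 = "(\<tau> v0, {\<tau> v0, \<tau> w0}, g2)"
    have gF: "g1\<in>F" "g2\<in>F" "{\<tau> v0, \<tau> w0}\<in>g1" "{\<tau> v0, \<tau> w0}\<in>g2" using g(2) by blast+
    have P1: "?\<Psi>1 \<in> flags V E F" and P2: "?\<Psi>2 \<in> flags V E F"
      using gF e'E tvV by (auto simp: flags_def)
    have "flag2 F ?\<Psi>1 = ?\<Psi>2"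
    proof -
      have "(THE g. g\<in>F \<and> {\<tau> v0, \<tau> w0}\<in>g \<and> g\<noteq>g1) = g2"
        using g by (intro the_equality) blast+
      then show ?thesis by (simp add: flag2_def)
    qed
    moreover have "flag2 F ?\<Psi>1 \<notin> ?O ?\<Psi>1" using cl P1 unfolding class_2_01_def by blast
    ultimately have n12: "?\<Psi>2 \<notin> ?O ?\<Psi>1" by simp
    have self: "\<Psi> \<in> ?O \<Psi>" if psi: "\<Psi> \<in> flags V E F" for \<Psi>
    proof -
      obtain v e h where "\<Psi> = (v,e,h)" "v\<in>V" "e\<in>E" "h\<in>F" using psi unfolding flags_def by blast
      then show ?thesis using id_fa[of v e h] E_sub id_map unfolding flag_orbit_def by (metis image_eqI)
    qed
    have O12: "?O ?\<Psi>1 \<noteq> ?O ?\<Psi>2" using self[OF P2] n12 by auto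
    let ?S = "?O ` flags V E F"
    have cS: "card ?S = 2" using cl[unfolded class_2_01_def] by (rule conjunct1)
    have fS: "finite ?S"
    proof (rule ccontr)
      assume "infinite ?S" then have "card ?S = 0" by (rule card.infinite)
      with cS show False by simp
    qed
    have inS: "?O ?\<Phi> \<in> ?S" "?O ?\<Psi>1 \<in> ?S" "?O ?\<Psi>2 \<in> ?S" using Phi P1 P2 by blast+
    have "?O ?\<Phi> = ?O ?\<Psi>1 \<or> ?O ?\<Phi> = ?O ?\<Psi>2"
    proof (rule ccontr)
      assume "\<not> ?thesis"
      then have "card {?O ?\<Phi>, ?O ?\<Psi>1, ?O ?\<Psi>2} = 3" using O12 by simp
      moreover have "card {?O ?\<Phi>, ?O ?\<Psi>1, ?O ?\<Psi>2} \<le> card ?S" using inS fS by (intro card_mono) auto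
      ultimately show False using cS by simp
    qed
    then have "?\<Psi>1 \<in> ?O ?\<Phi> \<or> ?\<Psi>2 \<in> ?O ?\<Phi>"
    proof
      assume "?O ?\<Phi> = ?O ?\<Psi>1" then show ?thesis using self[OF P1] by simp
    next
      assume "?O ?\<Phi> = ?O ?\<Psi>2" then show ?thesis using self[OF P2] by simp
    qed
    then have "\<exists>g. (\<tau> v0, {\<tau> v0, \<tau> w0}, g) \<in> ?O ?\<Phi>" by (elim disjE) (rule exI, assumption)+
    then obtain g where gg: "(\<tau> v0, {\<tau> v0, \<tau> w0}, g) \<in> ?O ?\<Phi>" by (rule exE)
    then obtain \<rho> where r0: "(\<tau> v0, {\<tau> v0, \<tau> w0}, g) = flag_act \<rho> ?\<Phi>" "\<rho> \<in> map_auts V E F"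
      unfolding flag_orbit_def by (rule imageE)
    note r = r0(2) r0(1)[symmetric]
    have "\<rho> \<in> A" using r(1) by (simp add: map_auts_def)
    then have "\<rho> = \<tau>" using act_arc(1)[OF _ tA r(2)] by blast
    then show "\<tau> \<in> map_auts V E F" using r(1) by simp
  qed
qed

lemma FinvA: "\<sigma>\<in>A \<Longrightarrow> face_image \<sigma> ` F = F" using mA by (auto simp: map_auts_def)

lemma orbitA: "flag_orbit V E F \<Phi> = (\<lambda>\<sigma>. flag_act \<sigma> \<Phi>) ` A" by (simp add: flag_orbit_def mA)

lemma face_struct: assumes g: "g\<in>F" "{v0,w0}\<in>g" shows "\<exists>\<kappa>. good \<kappa> \<and> g = fc \<kappa>"
proof -
  let ?O = "flag_orbit V E F"
  let ?\<Phi> = "(v0,{v0,w0},g)"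
  have Phi: "?\<Phi> \<in> flags V E F" using g v0V e0 by (simp add: flags_def)
  have gE: "g \<subseteq> E" using F_E'[OF g(1)] .
  have "flag0 ?\<Phi> = (w0,{v0,w0},g)"
  proof -
    have "(THE u. u\<in>{v0,w0} \<and> u \<noteq> v0) = w0" using v0w0 by (intro the_equality) auto
    then show ?thesis by (simp add: flag0_def)
  qed
  moreover have "flag0 ?\<Phi> \<in> ?O ?\<Phi>" using cl Phi unfolding class_2_01_def by blast
  ultimately have "(w0,{v0,w0},g) \<in> ?O ?\<Phi>" by simp
  then obtain \<rho> where r0: "(w0,{v0,w0},g) = flag_act \<rho> ?\<Phi>" "\<rho>\<in>A" unfolding orbitA by (rule imageE)
  note r = r0(2) r0(1)[symmetric]
  then have "flag_act \<rho> ?\<Phi> = (t v0, {t v0, t w0}, g)" using t by (simp add: insert_commute)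
  then have "\<rho> = t" "face_image \<rho> g = g" using act_arc[OF r(1) t(1)] by auto
  then have gt: "face_image t g = g" by simp
  have "v0 \<in> \<Union>g" using g(2) by blast
  moreover have "\<forall>v\<in>\<Union>g. card {e\<in>g. v\<in>e} = 2" using F_cyc[OF g(1)] unfolding is_cycle_def by blast
  ultimately have c2: "card {e\<in>g. v0\<in>e} = 2" by blast
  then have "\<exists>y z. {e\<in>g. v0\<in>e} = {y,z} \<and> y\<noteq>z" by (simp only: card_2_iff)
  then obtain y z where yz: "{e\<in>g. v0\<in>e} = {y,z}" "y\<noteq>z" by (elim exE conjE)
  define e' where "e' = (if y = {v0,w0} then z else y)"
  have "{v0,w0} \<in> {e\<in>g. v0\<in>e}" using g(2) by simp
  then have e0in: "{v0,w0} \<in> {y,z}" using yz(1) by simp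
  have at: "{e\<in>g. v0\<in>e} = {{v0,w0}, e'} \<and> e' \<noteq> {v0,w0}"
  proof (cases "y = {v0,w0}")
    case True then show ?thesis using yz unfolding e'_def by simp
  next
    case False then have "z = {v0,w0}" using e0in by simp
    then show ?thesis using yz False unfolding e'_def by (simp add: insert_commute)
  qed
  then have at: "{e\<in>g. v0\<in>e} = {{v0,w0}, e'}" "e' \<noteq> {v0,w0}" by auto
  have e'g: "e' \<in> g" "v0 \<in> e'" using at by auto
  then have e'E: "e' \<in> E" using gE by blast
  obtain a b where "e' = {a,b}" using E_edge[OF e'E] by blast
  then obtain w' where w': "e' = {v0,w'}" using e'g(2) by (metis insert_commute insertE singletonD)
  have w'V: "w' \<in> V" "w' \<noteq> v0" using E_V[of v0 w'] e'E w' by auto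
  have w'w0: "w' \<noteq> w0" using at(2) w' by blast
  have "flag1 ?\<Phi> = (v0, e', g)"
  proof -
    have "(THE e''. e''\<in>g \<and> v0\<in>e'' \<and> e''\<noteq>{v0,w0}) = e'" using at by (intro the_equality) blast+
    then show ?thesis by (simp add: flag1_def)
  qed
  moreover have "flag1 ?\<Phi> \<in> ?O ?\<Phi>" using cl Phi unfolding class_2_01_def by blast
  ultimately have "(v0, e', g) \<in> ?O ?\<Phi>" by simp
  then obtain \<kappa> where k0: "(v0, {v0,w'}, g) = flag_act \<kappa> ?\<Phi>" "\<kappa>\<in>A" unfolding orbitA w' by (rule imageE)
  note k = k0(2) k0(1)[symmetric]
  have kv0: "\<kappa> v0 = v0" and kw: "{v0, \<kappa> w0} = {v0,w'}" and kg: "face_image \<kappa> g = g"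
    using k(2) by (auto simp: flag_act_def)
  have kw0: "\<kappa> w0 = w'"
  proof -
    have "\<kappa> w0 \<noteq> v0" using A_inj[OF k(1) w0V v0V] v0w0 kv0 by auto
    then show ?thesis using kw by (auto simp: doubleton_eq_iff)
  qed
  have "{\<kappa> v0, \<kappa> w'} \<in> g" using fi_mem[of v0 w' g \<kappa>] e'g(1) w' kg by simp
  then have "{v0, \<kappa> w'} \<in> {e\<in>g. v0\<in>e}" using kv0 by simp
  then have "{v0, \<kappa> w'} \<in> {{v0,w0}, {v0,w'}}" using at(1) w' by (simp only:)
  then have "{v0, \<kappa> w'} = {v0,w0} \<or> {v0, \<kappa> w'} = {v0,w'}" by (simp only: insert_iff empty_iff simp_thms)
  moreover have "\<kappa> w' \<noteq> v0" using A_inj[OF k(1) w'V(1) v0V] w'V kv0 by auto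
  moreover have "\<kappa> w' \<noteq> w'" using A_inj[OF k(1) w'V(1) w0V] w'w0 kw0 by auto
  ultimately have kw': "\<kappa> w' = w0" by (auto simp: doubleton_eq_iff)
  have inv: "\<forall>x\<in>V. \<kappa> (\<kappa> x) = x" using A_invol[OF k(1) e0] kv0 kw0 kw' by simp
  have gd: "good \<kappa>" unfolding good_def K_def using k(1) kv0 inv kw0 w'w0 by simp
  interpret KK: gk V E v0 w0 \<kappa> by unfold_locales (rule gd)
  have sub: "fc \<kappa> \<subseteq> g"
  proof -
    have "{KK.x k, KK.x (Suc k)} \<in> g" for k
    proof (induction k)
      case 0 then show ?case using g(2) KK.x_0 KK.x_1 by simp
    next
      case (Suc k)
      have "{\<kappa> (KK.x k), \<kappa> (KK.x (Suc k))} \<in> g" using fi_mem[OF Suc, of \<kappa>] kg by simp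
      then have "{t (\<kappa> (KK.x k)), t (\<kappa> (KK.x (Suc k)))} \<in> g" using fi_mem[of _ _ g t] gt by metis
      then show ?case by (simp add: KK.x_Suc)
    qed
    then show ?thesis unfolding fc_def cyc_def by blast
  qed
  have ne: "\<forall>e\<in>g. e \<noteq> {}" using gE E_edge by blast
  have "fc \<kappa> = g" using cycle_sub_eq[OF KK.fc_cycle F_cyc[OF g(1)] sub ne] .
  then show ?thesis using gd by blast
qed

lemma valid_form: "\<exists>\<kappa>1 \<kappa>2. good \<kappa>1 \<and> good \<kappa>2 \<and> \<kappa>1 w0 \<noteq> \<kappa>2 w0 \<and> F = orbF {fc \<kappa>1, fc \<kappa>2}"
proof -
  obtain g1 g2 where g: "g1\<noteq>g2" "{f\<in>F. {v0,w0}\<in>f} = {g1,g2}" using two_faces[OF e0] by blast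
  obtain \<kappa>1 where k1: "good \<kappa>1" "g1 = fc \<kappa>1" using face_struct g(2) by blast
  obtain \<kappa>2 where k2: "good \<kappa>2" "g2 = fc \<kappa>2" using face_struct g(2) by blast
  have ne: "\<kappa>1 w0 \<noteq> \<kappa>2 w0"
  proof
    assume h: "\<kappa>1 w0 = \<kappa>2 w0"
    have "\<kappa>1 \<in> A" "\<kappa>2 \<in> A" "\<kappa>1 v0 = v0" "\<kappa>2 v0 = v0" using k1 k2 by (auto simp: good_def K_def)
    then have "\<kappa>1 = \<kappa>2" using A_uniq[OF _ _ e0] h by simp
    then show False using g(1) k1 k2 by simp
  qed
  have "F = orbF {g1,g2}"
  proof (rule equalityI; rule subsetI)
    fix f assume f: "f \<in> F"
    obtain e where e: "e \<in> f" using F_cyc[OF f] by (auto simp: is_cycle_def)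
    then have eE: "e\<in>E" using F_E'[OF f] by blast
    obtain u w where uw: "e = {u,w}" using E_edge[OF eE] by blast
    obtain \<sigma> where s: "\<sigma>\<in>A" "\<sigma> v0 = u" "\<sigma> w0 = w" using A_ex[OF e0] eE uw by blast
    obtain \<sigma>' where s': "\<sigma>'\<in>A" "\<forall>x\<in>V. \<sigma>' (\<sigma> x) = x \<and> \<sigma> (\<sigma>' x) = x"
      using A_inv[OF s(1)] by (elim bexE) simp
    have "face_image \<sigma>' f \<in> F" using FinvA[OF s'(1)] f by blast
    moreover have "{v0,w0} \<in> face_image \<sigma>' f"
    proof -
      have "\<sigma>' u = v0" "\<sigma>' w = w0" using s s'(2) v0V w0V by auto
      then show ?thesis using fi_mem[of u w f \<sigma>'] e uw by simp
    qed
    ultimately have "face_image \<sigma>' f \<in> {g1,g2}" using g(2) by blast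
    moreover have "face_image \<sigma> (face_image \<sigma>' f) = f"
    proof -
      have "\<forall>x\<in>V. \<sigma> (\<sigma>' x) = x" using s' by simp
      then show ?thesis using fi_cancel[of \<sigma> \<sigma>' f] F_V[OF f] by simp
    qed
    ultimately show "f \<in> orbF {g1,g2}" unfolding orbF_def using s(1) by blast
  next
    fix f assume "f \<in> orbF {g1,g2}"
    then obtain \<sigma> g where "\<sigma>\<in>A" "g \<in> {g1,g2}" "f = face_image \<sigma> g" unfolding orbF_def by blast
    moreover have "g \<in> F" using g(2) calculation(2) by blast
    ultimately show "f \<in> F" using FinvA by blast
  qed
  then show ?thesis using k1 k2 ne by blast
qed

end

lemma klein_carrier: "carrier klein_four_group = {0..<2} \<times> {0..<2}"
  by (simp add: klein_four_group_def carrier_integer_mod_group)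

lemma klein_mult: "monoid.mult klein_four_group (i,j) (i',j') = ((i+i') mod 2, (j+j') mod 2)"
  by (simp add: klein_four_group_def)

lemma klein_group: "group klein_four_group"
  unfolding klein_four_group_def by (intro DirProd_group group_integer_mod_group)

context arg begin

lemma stab_carrier: "carrier (vertex_stabilizer V E v) = K v"
  by (simp add: vertex_stabilizer_def aut_group_def K_def)

lemma stab_mult: "x\<in>A \<Longrightarrow> y\<in>A \<Longrightarrow> monoid.mult (vertex_stabilizer V E v) x y = compose V x y"
  by (simp add: vertex_stabilizer_def aut_group_def BijGroup_def graph_auts_def)

lemma stab_invol: assumes "vertex_stabilizer V E v \<cong> klein_four_group" "\<kappa> \<in> K v" "v \<in> V"
  shows "\<forall>x\<in>V. \<kappa> (\<kappa> x) = x"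
proof -
  obtain h where h: "h \<in> iso (vertex_stabilizer V E v) klein_four_group" using assms(1) unfolding is_iso_def by blast
  have hom: "h \<in> hom (vertex_stabilizer V E v) klein_four_group" and
       inj: "inj_on h (K v)" and hc: "\<And>y. y \<in> K v \<Longrightarrow> h y \<in> {0..<2} \<times> {0..<2}"
    using h unfolding iso_def bij_betw_def stab_carrier[symmetric] klein_carrier[symmetric]
    by (auto simp: hom_def)
  have mh: "h (compose V x y) = monoid.mult klein_four_group (h x) (h y)" if "x \<in> K v" "y \<in> K v" for x y
  proof -
    have "h (monoid.mult (vertex_stabilizer V E v) x y) = monoid.mult klein_four_group (h x) (h y)"
      using hom that unfolding hom_def stab_carrier by blast
    then show ?thesis using stab_mult[OF K_A[OF that(1)] K_A[OF that(2)]] by simp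
  qed
  have dbl: "monoid.mult klein_four_group p p = (0,0)" if "p \<in> {0..<2} \<times> {0..<2}" for p
    using that by (cases p) (auto simp: klein_mult)
  have idK: "(\<lambda>x\<in>V. x) \<in> K v" using A_id assms(3) by (simp add: K_def)
  have ck: "compose V \<kappa> \<kappa> \<in> K v" using A_comp[OF K_A[OF assms(2)] K_A[OF assms(2)]] assms(2,3)
    by (simp add: K_def compose_def)
  have "h (compose V \<kappa> \<kappa>) = (0,0)" using mh[OF assms(2) assms(2)] dbl hc[OF assms(2)] by simp
  moreover have "h (\<lambda>x\<in>V. x) = (0,0)"
  proof -
    have "compose V (\<lambda>x\<in>V. x) (\<lambda>x\<in>V. x) = (\<lambda>x\<in>V. x)" by (rule ext) (simp add: compose_def)
    then have "h (\<lambda>x\<in>V. x) = monoid.mult klein_four_group (h (\<lambda>x\<in>V. x)) (h (\<lambda>x\<in>V. x))"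
      using mh[OF idK idK] by simp
    moreover obtain i j where "h (\<lambda>x\<in>V. x) = (i,j)" "i \<in> {0..<2}" "j \<in> {0..<2}" using hc[OF idK] by force
    ultimately show ?thesis by (auto simp: klein_mult)
  qed
  ultimately have "compose V \<kappa> \<kappa> = (\<lambda>x\<in>V. x)" using inj ck idK by (metis inj_onD)
  then show ?thesis by (metis compose_eq restrict_apply')
qed

end

context arc0 begin

lemma klein_from_two: assumes g1: "good a" and g2: "good b" and ne: "a w0 \<noteq> b w0"
  shows "vertex_stabilizer V E v0 \<cong> klein_four_group"
proof -
  interpret T: two V E v0 w0 a b by unfold_locales (rule g1, rule g2, rule ne)
  interpret GA: gk V E v0 w0 a by unfold_locales (rule g1)
  interpret GB: gk V E v0 w0 b by unfold_locales (rule g2)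
  define c where "c = compose V a b"
  define i where "i = (\<lambda>x\<in>V. x)"
  have aA: "a \<in> A" and bA: "b\<in>A" and cA: "c\<in>A" and iA: "i\<in>A"
    using GA.kA GB.kA A_comp[OF GA.kA GB.kA] A_id unfolding c_def i_def by auto
  have awV: "a w0 \<in> V" and bwV: "b w0 \<in> V" using A_V aA bA w0V by auto
  have abwV: "a (b w0) \<in> V" using A_V[OF aA bwV] .
  have cw: "c w0 = a (b w0)" "c v0 = v0" using w0V v0V GA.kv0 GB.kv0 by (auto simp: c_def compose_def)
  have iw: "i w0 = w0" "i v0 = v0" using w0V v0V by (auto simp: i_def)
  have eN: "\<And>\<sigma>. \<sigma> \<in> K v0 \<Longrightarrow> \<sigma> w0 \<in> N v0" using K_bij[OF e0] bij_betwE by blast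
  have inK: "a \<in> K v0" "b \<in> K v0" "c \<in> K v0" "i \<in> K v0"
    using aA bA cA iA GA.kv0 GB.kv0 cw iw by (auto simp: K_def)
  have Nv: "N v0 = {w0, a w0, b w0, a (b w0)}"
    using four_elems[OF card_N(2)[OF v0V] card_N(1)[OF v0V] eN[OF inK(4)] eN[OF inK(1)] eN[OF inK(2)]
        eN[OF inK(3)]] iw cw GA.kw0 GB.kw0 ne T.bgw by auto
  have Kv: "K v0 = {i, a, b, c}"
  proof (rule equalityI; rule subsetI)
    fix \<sigma> assume s: "\<sigma> \<in> K v0"
    then have sA: "\<sigma> \<in> A" "\<sigma> v0 = v0" by (auto simp: K_def)
    have "\<sigma> w0 \<in> N v0" using eN[OF s] .
    then have "\<sigma> w0 = i w0 \<or> \<sigma> w0 = a w0 \<or> \<sigma> w0 = b w0 \<or> \<sigma> w0 = c w0" using Nv iw cw by auto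
    moreover have "\<sigma> v0 = i v0" "\<sigma> v0 = a v0" "\<sigma> v0 = b v0" "\<sigma> v0 = c v0"
      using sA iw cw GA.kv0 GB.kv0 by auto
    ultimately have "\<sigma> = i \<or> \<sigma> = a \<or> \<sigma> = b \<or> \<sigma> = c"
      using A_uniq[OF sA(1) iA e0] A_uniq[OF sA(1) aA e0] A_uniq[OF sA(1) bA e0] A_uniq[OF sA(1) cA e0]
      by blast
    then show "\<sigma> \<in> {i, a, b, c}" by blast
  qed (use inK in auto)
  have baK: "compose V b a \<in> K v0" using A_comp[OF bA aA] GA.kv0 GB.kv0 v0V by (simp add: K_def compose_def)
  have baw: "compose V b a w0 = b (a w0)" using w0V by (simp add: compose_def)
  have "compose V b a = c"
  proof -
    have "b (a w0) \<noteq> w0"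
    proof
      assume "b (a w0) = w0" then have "b (b (a w0)) = b w0" by simp
      then show False using GB.kk awV ne by simp
    qed
    moreover have "b (a w0) \<noteq> a w0"
    proof
      assume h: "b (a w0) = a w0"
      have "{v0, a w0} \<in> E" using A_edge[OF aA e0] GA.kv0 by simp
      then have "b = (\<lambda>x\<in>V. x)" using A_fix[OF bA] GB.kv0 h by blast
      then show False using GB.kw0 w0V by simp
    qed
    moreover have "b (a w0) \<noteq> b w0" using A_inj[OF bA awV w0V] GA.kw0 by blast
    moreover have "b (a w0) \<in> N v0" using eN[OF baK] baw by simp
    ultimately have "b (a w0) = a (b w0)" using Nv by auto
    then have "compose V b a w0 = c w0" using baw cw by simp
    moreover have "compose V b a v0 = c v0" using baK cw by (simp add: K_def)
    ultimately show ?thesis using A_uniq[OF A_comp[OF bA aA] cA e0] by simp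
  qed
  then have comm: "\<forall>x\<in>V. b (a x) = a (b x)" unfolding c_def by (metis compose_eq)
  have aa: "\<forall>x\<in>V. a (a x) = x" and bb: "\<forall>x\<in>V. b (b x) = x" using GA.kk GB.kk by auto
  have ext_eq: "\<And>f g. f\<in>A \<Longrightarrow> g\<in>A \<Longrightarrow> (\<And>x. x\<in>V \<Longrightarrow> f x = g x) \<Longrightarrow> f = g" using A_eq by blast
  have cV: "\<And>f g x. x\<in>V \<Longrightarrow> compose V f g x = f (g x)" by (simp add: compose_def)
  have aV: "\<And>x. x\<in>V \<Longrightarrow> a x \<in> V" and bV: "\<And>x. x\<in>V \<Longrightarrow> b x \<in> V" using A_V aA bA by auto
  have t1: "compose V i f = f" if "f\<in>A" for f
    by (rule ext_eq[OF A_comp[OF iA that] that]) (simp add: cV i_def A_V[OF that])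
  have t2: "compose V f i = f" if "f\<in>A" for f
    by (rule ext_eq[OF A_comp[OF that iA] that]) (simp add: cV i_def)
  have t3: "compose V a a = i" by (rule ext_eq[OF A_comp[OF aA aA] iA]) (simp add: cV aa i_def)
  have t4: "compose V b b = i" by (rule ext_eq[OF A_comp[OF bA bA] iA]) (simp add: cV bb i_def)
  have t5: "compose V a b = c" by (simp add: c_def)
  have t6: "compose V b a = c" by fact
  have t7: "compose V a c = b" by (rule ext_eq[OF A_comp[OF aA cA] bA]) (simp add: cV aa bV c_def)
  have t8: "compose V c a = b" by (rule ext_eq[OF A_comp[OF cA aA] bA]) (simp add: cV aa bV aV comm c_def)
  have t9: "compose V b c = a" by (rule ext_eq[OF A_comp[OF bA cA] aA]) (simp add: cV bb bV aV comm c_def)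
  have t10: "compose V c b = a" by (rule ext_eq[OF A_comp[OF cA bA] aA]) (simp add: cV bb bV c_def)
  have t11: "compose V c c = i" by (rule ext_eq[OF A_comp[OF cA cA] iA]) (simp add: cV aa bb aV bV comm c_def i_def)
  have dist: "i \<noteq> a" "i \<noteq> b" "i \<noteq> c" "a \<noteq> b" "a \<noteq> c" "b \<noteq> c"
    using iw cw GA.kw0 GB.kw0 ne T.bgw by (metis)+
  define \<phi> :: "int \<times> int \<Rightarrow> 'a \<Rightarrow> 'a" where
    "\<phi> p = (if p = (0,0) then i else if p = (1,0) then a else if p = (0,1) then b else c)" for p
  have cases4: "p = (0,0) \<or> p = (1,0) \<or> p = (0,1) \<or> p = (1,1)" if "p \<in> {0..<2} \<times> {0..<2}" for p :: "int \<times> int"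
    using that by (cases p) auto
  have hom: "\<phi> \<in> hom klein_four_group (vertex_stabilizer V E v0)"
  proof (rule homI)
    fix p assume "p \<in> carrier klein_four_group"
    then have "\<phi> p \<in> {i,a,b,c}" unfolding \<phi>_def by auto
    then show "\<phi> p \<in> carrier (vertex_stabilizer V E v0)" using Kv stab_carrier by simp
  next
    fix p q assume pq: "p \<in> carrier klein_four_group" "q \<in> carrier klein_four_group"
    have "\<phi> p \<in> A" "\<phi> q \<in> A" unfolding \<phi>_def using aA bA cA iA by auto
    then have m: "monoid.mult (vertex_stabilizer V E v0) (\<phi> p) (\<phi> q) = compose V (\<phi> p) (\<phi> q)"
      using stab_mult by blast
    show "\<phi> (monoid.mult klein_four_group p q) = monoid.mult (vertex_stabilizer V E v0) (\<phi> p) (\<phi> q)"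
      unfolding m using cases4[OF pq(1)[unfolded klein_carrier]] cases4[OF pq(2)[unfolded klein_carrier]]
      by (elim disjE) (simp_all add: klein_mult \<phi>_def t1 t2 t3 t4 t5 t6 t7 t8 t9 t10 t11 aA bA cA iA)
  qed
  have bij: "bij_betw \<phi> (carrier klein_four_group) (carrier (vertex_stabilizer V E v0))"
  proof -
    have "\<phi> ` ({0..<2} \<times> {0..<2}) = {i,a,b,c}"
    proof (rule equalityI; rule subsetI)
      fix y assume "y \<in> \<phi> ` ({0..<2} \<times> {0..<2})"
      then show "y \<in> {i,a,b,c}" unfolding \<phi>_def by auto
    next
      fix y assume "y \<in> {i,a,b,c}"
      moreover have "\<phi> (0,0) = i" "\<phi> (1,0) = a" "\<phi> (0,1) = b" "\<phi> (1,1) = c" by (auto simp: \<phi>_def)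
      moreover have "(0,0) \<in> {0..<2::int} \<times> {0..<2::int}" "(1,0) \<in> {0..<2::int} \<times> {0..<2::int}"
        "(0,1) \<in> {0..<2::int} \<times> {0..<2::int}" "(1,1) \<in> {0..<2::int} \<times> {0..<2::int}" by auto
      ultimately show "y \<in> \<phi> ` ({0..<2} \<times> {0..<2})" by (metis empty_iff image_eqI insert_iff)
    qed
    moreover have "inj_on \<phi> ({0..<2} \<times> {0..<2})"
    proof (rule inj_onI)
      fix p q assume "p \<in> {0..<2::int} \<times> {0..<2::int}" "q \<in> {0..<2::int} \<times> {0..<2::int}" "\<phi> p = \<phi> q"
      then show "p = q" using cases4[of p] cases4[of q] dist unfolding \<phi>_def by auto
    qed
    ultimately show ?thesis unfolding klein_carrier stab_carrier Kv bij_betw_def by simp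
  qed
  have "\<phi> \<in> iso klein_four_group (vertex_stabilizer V E v0)" using hom bij by (rule isoI)
  then have "inv_into (carrier klein_four_group) \<phi> \<in> iso (vertex_stabilizer V E v0) klein_four_group"
    using group.iso_set_sym[OF klein_group] by blast
  then show ?thesis unfolding is_iso_def by blast
qed

end

context arc0 begin

lemma fc_inj: assumes "good a" "good b" "fc a = fc b" shows "a w0 = b w0"
proof -
  interpret GA: gk V E v0 w0 a by unfold_locales (rule assms(1))
  interpret GB: gk V E v0 w0 b by unfold_locales (rule assms(2))
  have "{{v0,w0}, {v0, a w0}} = {{v0,w0}, {v0, b w0}}" using GA.fc_at(1) GB.fc_at(1) assms(3) by simp
  then have "{v0, a w0} = {v0, b w0}" using GA.fc_at(2) GB.fc_at(2) by (auto simp: doubleton_eq_iff)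
  then show ?thesis using GA.fc_at(2) by (auto simp: doubleton_eq_iff)
qed

lemma noniso: assumes ga: "good a" and gb: "good b" and ab: "a w0 \<noteq> b w0"
  and gc: "good c" and gd: "good d" and cd: "c w0 \<noteq> d w0"
  and ne: "{a w0, b w0} \<noteq> {c w0, d w0}"
  shows "\<not> map_isomorphic V E (orbF (fc ` {a, b})) (orbF (fc ` {c, d}))"
proof
  interpret T1: two V E v0 w0 a b by unfold_locales (rule ga, rule gb, rule ab)
  interpret T2: two V E v0 w0 c d by unfold_locales (rule gc, rule gd, rule cd)
  assume "map_isomorphic V E (orbF (fc ` {a, b})) (orbF (fc ` {c, d}))"
  then obtain \<sigma> where "\<sigma>\<in>A" "face_image \<sigma> ` orbF {fc a, fc b} = orbF {fc c, fc d}"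
    unfolding map_isomorphic_def by auto
  then have "orbF {fc a, fc b} = orbF {fc c, fc d}" using T1.F_inv by simp
  then have eq0: "{f\<in>orbF {fc a, fc b}. {v0,w0}\<in>f} = {f\<in>orbF {fc c, fc d}. {v0,w0}\<in>f}" by (simp only:)
  have "{fc a, fc b} = {f\<in>orbF {fc a, fc b}. {v0,w0}\<in>f}" by (rule T1.F_e0[symmetric])
  also have "\<dots> = {f\<in>orbF {fc c, fc d}. {v0,w0}\<in>f}" by (rule eq0)
  also have "\<dots> = {fc c, fc d}" by (rule T2.F_e0)
  finally have eq: "{fc a, fc b} = {fc c, fc d}" .
  have "a w0 \<in> {c w0, d w0}" "b w0 \<in> {c w0, d w0}" "c w0 \<in> {a w0, b w0}" "d w0 \<in> {a w0, b w0}"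
    using eq fc_inj ga gb gc gd by (auto simp: doubleton_eq_iff)
  then show False using ne by auto
qed

lemma count: assumes kl: "\<forall>\<kappa>\<in>K v0. \<forall>x\<in>V. \<kappa> (\<kappa> x) = x"
  shows "\<exists>F1 F2 F3. class_2_01_map V E F1 \<and> class_2_01_map V E F2 \<and> class_2_01_map V E F3 \<and>
               \<not> map_isomorphic V E F1 F2 \<and> \<not> map_isomorphic V E F1 F3 \<and>
               \<not> map_isomorphic V E F2 F3 \<and>
               (\<forall>F. class_2_01_map V E F \<longrightarrow>
                  map_isomorphic V E F F1 \<or> map_isomorphic V E F F2 \<or> map_isomorphic V E F F3)"
proof -
  have w0N: "w0 \<in> N v0" using e0 by (simp add: N_def)
  have "card (N v0 - {w0}) = 3" using card_N[OF v0V] w0N by simp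
  then obtain n1 n2 n3 where n: "N v0 - {w0} = {n1,n2,n3}" "n1\<noteq>n2" "n2\<noteq>n3" "n1\<noteq>n3"
    unfolding card_3_iff by blast
  have bK: "(\<lambda>\<kappa>. \<kappa> w0) ` K v0 = N v0" using K_bij[OF e0] by (simp add: bij_betw_def)
  have gk_of: "\<exists>k. good k \<and> k w0 = m" if mN: "m \<in> N v0 - {w0}" for m
  proof -
    have "m \<in> (\<lambda>\<kappa>. \<kappa> w0) ` K v0" using mN bK by blast
    then obtain k where "m = k w0" "k \<in> K v0" by (rule imageE)
    then show ?thesis using kl mN unfolding good_def by auto
  qed
  obtain k1 where k1: "good k1" "k1 w0 = n1" using gk_of n(1) by blast
  obtain k2 where k2: "good k2" "k2 w0 = n2" using gk_of n(1) by blast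
  obtain k3 where k3: "good k3" "k3 w0 = n3" using gk_of n(1) by blast
  define F1 where "F1 = orbF (fc ` {k1,k2})"
  define F2 where "F2 = orbF (fc ` {k1,k3})"
  define F3 where "F3 = orbF (fc ` {k2,k3})"
  have v1: "class_2_01_map V E F1"
  proof -
    interpret T: two V E v0 w0 k1 k2 by unfold_locales (use k1 k2 n in auto)
    show ?thesis using T.F_valid unfolding F1_def by simp
  qed
  have v2: "class_2_01_map V E F2"
  proof -
    interpret T: two V E v0 w0 k1 k3 by unfold_locales (use k1 k3 n in auto)
    show ?thesis using T.F_valid unfolding F2_def by simp
  qed
  have v3: "class_2_01_map V E F3"
  proof -
    interpret T: two V E v0 w0 k2 k3 by unfold_locales (use k2 k3 n in auto)
    show ?thesis using T.F_valid unfolding F3_def by simp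
  qed
  have i12: "\<not> map_isomorphic V E F1 F2" unfolding F1_def F2_def
    using noniso[OF k1(1) k2(1) _ k1(1) k3(1)] k1 k2 k3 n by (auto simp: doubleton_eq_iff)
  have i13: "\<not> map_isomorphic V E F1 F3" unfolding F1_def F3_def
    using noniso[OF k1(1) k2(1) _ k2(1) k3(1)] k1 k2 k3 n by (auto simp: doubleton_eq_iff)
  have i23: "\<not> map_isomorphic V E F2 F3" unfolding F2_def F3_def
    using noniso[OF k1(1) k3(1) _ k2(1) k3(1)] k1 k2 k3 n by (auto simp: doubleton_eq_iff)
  have compl: "map_isomorphic V E F F1 \<or> map_isomorphic V E F F2 \<or> map_isomorphic V E F F3"
    if vF: "class_2_01_map V E F" for F
  proof -
    interpret M: vm V E v0 w0 F by unfold_locales (rule vF)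
    obtain \<kappa>1 \<kappa>2 where kk: "good \<kappa>1" "good \<kappa>2" "\<kappa>1 w0 \<noteq> \<kappa>2 w0" "F = orbF {fc \<kappa>1, fc \<kappa>2}"
      using M.valid_form by blast
    have which: "\<kappa> = k1 \<or> \<kappa> = k2 \<or> \<kappa> = k3" if gkap: "good \<kappa>" for \<kappa>
    proof -
      have kK: "\<kappa> \<in> K v0" "\<kappa> w0 \<noteq> w0" using gkap by (auto simp: good_def)
      have "\<kappa> w0 \<in> N v0" using kK(1) bK by blast
      then have "\<kappa> w0 \<in> {n1,n2,n3}" using kK(2) n(1) by blast
      moreover have "\<kappa> \<in> A" "\<kappa> v0 = v0" using kK(1) by (auto simp: K_def)
      moreover have "k1 \<in> A" "k2 \<in> A" "k3 \<in> A" "k1 v0 = v0" "k2 v0 = v0" "k3 v0 = v0"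
        using k1 k2 k3 by (auto simp: good_def K_def)
      ultimately show ?thesis using A_uniq[OF _ _ e0] k1 k2 k3 by (metis empty_iff insert_iff)
    qed
    have "{\<kappa>1,\<kappa>2} = {k1,k2} \<or> {\<kappa>1,\<kappa>2} = {k1,k3} \<or> {\<kappa>1,\<kappa>2} = {k2,k3}"
      using which[OF kk(1)] which[OF kk(2)] kk(3) by auto
    moreover have "F = orbF (fc ` {\<kappa>1,\<kappa>2})" using kk(4) by simp
    ultimately have "F = F1 \<or> F = F2 \<or> F = F3" unfolding F1_def F2_def F3_def
      by (elim disjE) (simp_all only: simp_thms)
    moreover have "map_isomorphic V E F F" unfolding map_isomorphic_def using M.FinvA[OF A_id] A_id by blast
    ultimately show ?thesis by blast
  qed
  show ?thesis using v1 v2 v3 i12 i13 i23 compl by blast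
qed

end

theorem corollary2p8:
  fixes V :: "'a set" and E :: "'a set set"
  assumes "tetravalent V E"
    and "arc_regular V E"
  shows "((\<exists>F. class_2_01_map V E F) \<longleftrightarrow>
            (\<forall>v\<in>V. vertex_stabilizer V E v \<cong> klein_four_group))
       \<and> ((\<exists>F. class_2_01_map V E F) \<longrightarrow>
            (\<exists>F1 F2 F3. class_2_01_map V E F1 \<and> class_2_01_map V E F2 \<and> class_2_01_map V E F3 \<and>
               \<not> map_isomorphic V E F1 F2 \<and> \<not> map_isomorphic V E F1 F3 \<and>
               \<not> map_isomorphic V E F2 F3 \<and>
               (\<forall>F. class_2_01_map V E F \<longrightarrow>
                  map_isomorphic V E F F1 \<or> map_isomorphic V E F F2 \<or> map_isomorphic V E F F3)))"
proof -
  interpret arg V E by unfold_locales (rule assms(1), rule assms(2))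
  have nb: "\<exists>w. {v,w} \<in> E" if "v \<in> V" for v
  proof -
    have "N v \<noteq> {}" using card_N[OF that] by auto
    then show ?thesis by (auto simp: N_def)
  qed
  have fwd: "\<forall>v\<in>V. vertex_stabilizer V E v \<cong> klein_four_group" if ex: "\<exists>F. class_2_01_map V E F"
  proof
    fix v assume vV: "v \<in> V"
    obtain w where w: "{v,w} \<in> E" using nb[OF vV] by blast
    obtain F where vF: "class_2_01_map V E F" using ex by blast
    interpret M: vm V E v w F by unfold_locales (rule w, rule vF)
    obtain \<kappa>1 \<kappa>2 where "M.good \<kappa>1" "M.good \<kappa>2" "\<kappa>1 w \<noteq> \<kappa>2 w" using M.valid_form by blast
    then show "vertex_stabilizer V E v \<cong> klein_four_group" using M.klein_from_two by blast
  qed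
  have bwd: "\<exists>F1 F2 F3. class_2_01_map V E F1 \<and> class_2_01_map V E F2 \<and> class_2_01_map V E F3 \<and>
               \<not> map_isomorphic V E F1 F2 \<and> \<not> map_isomorphic V E F1 F3 \<and>
               \<not> map_isomorphic V E F2 F3 \<and>
               (\<forall>F. class_2_01_map V E F \<longrightarrow>
                  map_isomorphic V E F F1 \<or> map_isomorphic V E F F2 \<or> map_isomorphic V E F F3)"
    if kl: "\<forall>v\<in>V. vertex_stabilizer V E v \<cong> klein_four_group"
  proof -
    have "V \<noteq> {}" using assms(1) by (simp add: tetravalent_def connected_graph_def)
    then obtain v0 where v0: "v0 \<in> V" by blast
    obtain w0 where w0: "{v0,w0} \<in> E" using nb[OF v0] by blast
    interpret C: arc0 V E v0 w0 by unfold_locales (rule w0)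
    have "\<forall>\<kappa>\<in>K v0. \<forall>x\<in>V. \<kappa> (\<kappa> x) = x" using stab_invol kl v0 by blast
    then show ?thesis using C.count by blast
  qed
  show ?thesis using fwd bwd by blast
qed


end
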